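(* Let $\omega$ be a T-obstacle. Then every cross of $\omega$ is a minimum skeleton for $\omega$.
   Context: An obstacle $\omega$ is a simple polygon in $\mathbb{R}^2$ (a closed, bounded polygonal region without holes whose boundary does not intersect itself), assumed in general position (no three of its vertices are collinear); vertices and edges of $\omega$ are those of its boundary. $\omega$ is rectilinear if each edge is horizontal or vertical, and a rectilinear obstacle is rectilinearly-convex if any two points of $\omega$ can be joined by a shortest rectilinear path (made of horizontal and vertical segments, of minimum $\ell_1$ length) contained in $\omega$. A corner point of a rectilinear path is a point where a horizontal and a vertical segment of the path meet. A set $S$ of closed line segments is inside $\omega$ if the union of its elements is contained in $\omega$. Such an $S$ is a skeleton for $\omega$ if for every pair of points $p,q$ not in the interior of $\omega$ such that every shortest rectilinear path between $p$ and $q$ with at most one corner point meets the interior of $\omega$, each such path intersects some element of $S$; a minimum skeleton is one with the fewest segments. $B(\omega)$ is the smallest closed axis-parallel rectangle containing $\omega$; the extreme edges are the edges of $\omega$ lying on the boundary of $B(\omega)$ (exactly four: left, right, bottom, top); an extreme corner is a vertex of $\omega$ that is a common endpoint of two extreme edges. A T-obstacle is a rectilinearly-convex obstacle with exactly two extreme corners, which are adjacent (lie on a common side of $B(\omega)$). A cross of $\omega$ is a pair $\{s_H,s_V\}$ of line segments contained in $\omega$, where $s_H$ has one endpoint on each of the two horizontal extreme edges and $s_V$ has one endpoint on each of the two vertical extreme edges. *)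

theory Defs
  imports "HOL-Analysis.Analysis"
begin

type_synonym pt = "real \<times> real"

text \<open>A polygon is given by its cyclic list of vertices; edge i joins vertex i to vertex i+1 (mod n).\<close>

definition nxt :: "pt list \<Rightarrow> nat \<Rightarrow> pt" where
  "nxt vs i = vs ! (Suc i mod length vs)"

definition edge_seg :: "pt list \<Rightarrow> nat \<Rightarrow> pt set" where
  "edge_seg vs i = closed_segment (vs ! i) (nxt vs i)"

definition polygon_boundary :: "pt list \<Rightarrow> pt set" where
  "polygon_boundary vs = (\<Union>i<length vs. edge_seg vs i)"

definition simple_polygon :: "pt list \<Rightarrow> bool" where
  "simple_polygon vs \<longleftrightarrow>
     length vs \<ge> 3 \<and> distinct vs \<and>
     (\<forall>a\<in>set vs. \<forall>b\<in>set vs. \<forall>c\<in>set vs.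
        a \<noteq> b \<and> a \<noteq> c \<and> b \<noteq> c \<longrightarrow> \<not> collinear {a, b, c}) \<and>
     (\<forall>i<length vs. \<forall>j<length vs. i \<noteq> j \<longrightarrow>
        edge_seg vs i \<inter> edge_seg vs j =
          (if Suc i mod length vs = j then {vs ! j}
           else if Suc j mod length vs = i then {vs ! i} else {}))"

text \<open>The obstacle: the closed region bounded by the polygon (boundary plus bounded complementary component).\<close>
definition region :: "pt list \<Rightarrow> pt set" where
  "region vs = polygon_boundary vs \<union> inside (polygon_boundary vs)"

definition edges :: "pt list \<Rightarrow> (pt \<times> pt) set" where
  "edges vs = {(vs ! i, nxt vs i) | i. i < length vs}"

definition rectilinear :: "pt list \<Rightarrow> bool" where
  "rectilinear vs \<longleftrightarrow> (\<forall>(a, b) \<in> edges vs. fst a = fst b \<or> snd a = snd b)"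

definition rect_path :: "pt list \<Rightarrow> bool" where
  "rect_path ps \<longleftrightarrow> ps \<noteq> [] \<and>
     (\<forall>i. Suc i < length ps \<longrightarrow> fst (ps ! i) = fst (ps ! Suc i) \<or> snd (ps ! i) = snd (ps ! Suc i))"

definition path_set :: "pt list \<Rightarrow> pt set" where
  "path_set ps = set ps \<union> (\<Union>i\<in>{i. Suc i < length ps}. closed_segment (ps ! i) (ps ! Suc i))"

definition l1 :: "pt \<Rightarrow> pt \<Rightarrow> real" where
  "l1 a b = \<bar>fst a - fst b\<bar> + \<bar>snd a - snd b\<bar>"

definition path_len :: "pt list \<Rightarrow> real" where
  "path_len ps = (\<Sum>i\<in>{i. Suc i < length ps}. l1 (ps ! i) (ps ! Suc i))"

definition rect_path_between :: "pt \<Rightarrow> pt \<Rightarrow> pt list \<Rightarrow> bool" where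
  "rect_path_between p q ps \<longleftrightarrow> rect_path ps \<and> hd ps = p \<and> last ps = q"

definition shortest_rect_path :: "pt \<Rightarrow> pt \<Rightarrow> pt list \<Rightarrow> bool" where
  "shortest_rect_path p q ps \<longleftrightarrow> rect_path_between p q ps \<and>
     (\<forall>ps'. rect_path_between p q ps' \<longrightarrow> path_len ps \<le> path_len ps')"

definition rect_convex :: "pt set \<Rightarrow> bool" where
  "rect_convex \<omega> \<longleftrightarrow> (\<forall>p\<in>\<omega>. \<forall>q\<in>\<omega>. \<exists>ps. shortest_rect_path p q ps \<and> path_set ps \<subseteq> \<omega>)"

text \<open>Images of the shortest rectilinear paths from p to q with at most one corner point:
  the two L-shaped paths (they coincide with the segment pq when p, q are axis-aligned).\<close>
definition L_paths :: "pt \<Rightarrow> pt \<Rightarrow> pt set set" where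
  "L_paths p q =
     {closed_segment p (fst q, snd p) \<union> closed_segment (fst q, snd p) q,
      closed_segment p (fst p, snd q) \<union> closed_segment (fst p, snd q) q}"

definition is_segment :: "pt set \<Rightarrow> bool" where
  "is_segment s \<longleftrightarrow> (\<exists>a b. a \<noteq> b \<and> s = closed_segment a b)"

definition skeleton :: "pt set \<Rightarrow> pt set set \<Rightarrow> bool" where
  "skeleton \<omega> S \<longleftrightarrow>
     (\<forall>s\<in>S. is_segment s) \<and> \<Union>S \<subseteq> \<omega> \<and>
     (\<forall>p q. p \<notin> interior \<omega> \<and> q \<notin> interior \<omega> \<and>
            (\<forall>P\<in>L_paths p q. P \<inter> interior \<omega> \<noteq> {}) \<longrightarrow>
            (\<forall>P\<in>L_paths p q. \<exists>s\<in>S. P \<inter> s \<noteq> {}))"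

definition minimum_skeleton :: "pt set \<Rightarrow> pt set set \<Rightarrow> bool" where
  "minimum_skeleton \<omega> S \<longleftrightarrow> skeleton \<omega> S \<and> finite S \<and>
     (\<forall>S'. skeleton \<omega> S' \<and> finite S' \<longrightarrow> card S \<le> card S')"

definition xmin :: "pt set \<Rightarrow> real" where "xmin \<omega> = Inf (fst ` \<omega>)"
definition xmax :: "pt set \<Rightarrow> real" where "xmax \<omega> = Sup (fst ` \<omega>)"
definition ymin :: "pt set \<Rightarrow> real" where "ymin \<omega> = Inf (snd ` \<omega>)"
definition ymax :: "pt set \<Rightarrow> real" where "ymax \<omega> = Sup (snd ` \<omega>)"

definition bbox :: "pt set \<Rightarrow> pt set" where
  "bbox \<omega> = {z. xmin \<omega> \<le> fst z \<and> fst z \<le> xmax \<omega> \<and> ymin \<omega> \<le> snd z \<and> snd z \<le> ymax \<omega>}"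

definition extreme_edges :: "pt list \<Rightarrow> (pt \<times> pt) set" where
  "extreme_edges vs = {(a, b) \<in> edges vs. closed_segment a b \<subseteq> frontier (bbox (region vs))}"

definition horizontal_extreme_edges :: "pt list \<Rightarrow> (pt \<times> pt) set" where
  "horizontal_extreme_edges vs = {(a, b) \<in> extreme_edges vs. snd a = snd b}"

definition vertical_extreme_edges :: "pt list \<Rightarrow> (pt \<times> pt) set" where
  "vertical_extreme_edges vs = {(a, b) \<in> extreme_edges vs. fst a = fst b}"

definition extreme_corners :: "pt list \<Rightarrow> pt set" where
  "extreme_corners vs = {v \<in> set vs. \<exists>e1 \<in> extreme_edges vs. \<exists>e2 \<in> extreme_edges vs.
      e1 \<noteq> e2 \<and> v \<in> {fst e1, snd e1} \<and> v \<in> {fst e2, snd e2}}"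

definition on_common_side :: "pt set \<Rightarrow> pt \<Rightarrow> pt \<Rightarrow> bool" where
  "on_common_side \<omega> u v \<longleftrightarrow> u \<in> bbox \<omega> \<and> v \<in> bbox \<omega> \<and>
     ((fst u = xmin \<omega> \<and> fst v = xmin \<omega>) \<or> (fst u = xmax \<omega> \<and> fst v = xmax \<omega>) \<or>
      (snd u = ymin \<omega> \<and> snd v = ymin \<omega>) \<or> (snd u = ymax \<omega> \<and> snd v = ymax \<omega>))"

definition T_obstacle :: "pt list \<Rightarrow> bool" where
  "T_obstacle vs \<longleftrightarrow> simple_polygon vs \<and> rectilinear vs \<and> rect_convex (region vs) \<and>
     card (extreme_corners vs) = 2 \<and>
     (\<forall>u\<in>extreme_corners vs. \<forall>v\<in>extreme_corners vs. on_common_side (region vs) u v)"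

definition is_cross :: "pt list \<Rightarrow> pt set \<Rightarrow> pt set \<Rightarrow> bool" where
  "is_cross vs sH sV \<longleftrightarrow>
     sH \<subseteq> region vs \<and> sV \<subseteq> region vs \<and>
     (\<exists>a b e1 e2. sH = closed_segment a b \<and> e1 \<in> horizontal_extreme_edges vs \<and>
        e2 \<in> horizontal_extreme_edges vs \<and> e1 \<noteq> e2 \<and>
        a \<in> closed_segment (fst e1) (snd e1) \<and> b \<in> closed_segment (fst e2) (snd e2)) \<and>
     (\<exists>c d e1 e2. sV = closed_segment c d \<and> e1 \<in> vertical_extreme_edges vs \<and>
        e2 \<in> vertical_extreme_edges vs \<and> e1 \<noteq> e2 \<and>
        c \<in> closed_segment (fst e1) (snd e1) \<and> d \<in> closed_segment (fst e2) (snd e2))"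

end

theory Submission
  imports Defs
begin

lemma int_sq: "(z::pt) \<in> interior S \<longleftrightarrow> (\<exists>e>0. \<forall>x y. \<bar>x - fst z\<bar> < e \<longrightarrow> \<bar>y - snd z\<bar> < e \<longrightarrow> (x,y) \<in> S)"
proof
  assume "z \<in> interior S"
  then obtain e where e: "e > 0" "ball z e \<subseteq> S" by (meson mem_interior)
  show "\<exists>e>0. \<forall>x y. \<bar>x - fst z\<bar> < e \<longrightarrow> \<bar>y - snd z\<bar> < e \<longrightarrow> (x,y) \<in> S"
  proof (intro exI[of _ "e/2"] conjI allI impI)
    fix x y assume h: "\<bar>x - fst z\<bar> < e/2" "\<bar>y - snd z\<bar> < e/2"
    have "dist (x,y) z = sqrt ((dist x (fst z))\<^sup>2 + (dist y (snd z))\<^sup>2)"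
      by (metis dist_Pair_Pair prod.collapse)
    also have "\<dots> \<le> \<bar>dist x (fst z)\<bar> + \<bar>dist y (snd z)\<bar>" by (rule sqrt_sum_squares_le_sum_abs)
    also have "\<dots> < e" using h by (simp add: dist_real_def)
    finally have "(x,y) \<in> ball z e" by (simp add: dist_commute)
    then show "(x,y) \<in> S" using e by blast
  qed (use e in auto)
next
  assume "\<exists>e>0. \<forall>x y. \<bar>x - fst z\<bar> < e \<longrightarrow> \<bar>y - snd z\<bar> < e \<longrightarrow> (x,y) \<in> S"
  then obtain e where e: "e>0" "\<forall>x y. \<bar>x - fst z\<bar> < e \<longrightarrow> \<bar>y - snd z\<bar> < e \<longrightarrow> (x,y) \<in> S" by blast
  have "ball z e \<subseteq> S"
  proof
    fix w assume "w \<in> ball z e"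
    then have d: "dist z w < e" by simp
    have "dist (fst z) (fst w) \<le> dist z w" "dist (snd z) (snd w) \<le> dist z w"
      by (rule dist_fst_le, rule dist_snd_le)
    then have "\<bar>fst w - fst z\<bar> < e" "\<bar>snd w - snd z\<bar> < e" using d by (auto simp: dist_real_def abs_minus_commute)
    then show "w \<in> S" using e(2) by (metis prod.collapse)
  qed
  then show "z \<in> interior S" using e(1) mem_interior by blast
qed

lemma not_int_sq: "(z::pt) \<notin> interior S \<Longrightarrow> e > 0 \<Longrightarrow> \<exists>x y. \<bar>x - fst z\<bar> < e \<and> \<bar>y - snd z\<bar> < e \<and> (x,y) \<notin> S"
  using int_sq by blast

lemma hseg_mem: fixes x y a b t :: real shows "(x,y) \<in> closed_segment (a,t) (b,t) \<longleftrightarrow> y = t \<and> min a b \<le> x \<and> x \<le> max a b"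
proof -
  have "((x::real),y) \<in> closed_segment (a,t) (b,t) \<longleftrightarrow> y = t \<and> x \<in> closed_segment a b"
    by (auto simp: closed_segment_def algebra_simps)
  then show ?thesis unfolding closed_segment_eq_real_ivl by (auto split: if_splits)
qed

lemma vseg_mem: fixes x y a b t :: real shows "(x,y) \<in> closed_segment (t,a) (t,b) \<longleftrightarrow> x = t \<and> min a b \<le> y \<and> y \<le> max a b"
proof -
  have e: "\<And>u. (1 - u) *\<^sub>R (t, a) + u *\<^sub>R (t, b) = (t, (1 - u) * a + u * b)"
    by (simp add: algebra_simps)
  have "((x::real),y) \<in> closed_segment (t,a) (t,b) \<longleftrightarrow> x = t \<and> y \<in> closed_segment a b"
    unfolding closed_segment_def e by auto
  then show ?thesis unfolding closed_segment_eq_real_ivl by (auto split: if_splits)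
qed

definition HC :: "pt set \<Rightarrow> bool" where
  "HC W \<longleftrightarrow> (\<forall>x1 x2 x y. (x1,y) \<in> W \<longrightarrow> (x2,y) \<in> W \<longrightarrow> x1 \<le> x \<longrightarrow> x \<le> x2 \<longrightarrow> (x,y) \<in> W)"
definition VC :: "pt set \<Rightarrow> bool" where
  "VC W \<longleftrightarrow> (\<forall>y1 y2 x y. (x,y1) \<in> W \<longrightarrow> (x,y2) \<in> W \<longrightarrow> y1 \<le> y \<longrightarrow> y \<le> y2 \<longrightarrow> (x,y) \<in> W)"

locale bot =
  fixes W :: "pt set" and x0 x1 y0 y1 tl tr hL hR :: real and a b c d :: pt
  assumes x01: "x0 < x1" and y01: "y0 < y1"
    and box: "\<And>z. z \<in> W \<Longrightarrow> x0 \<le> fst z \<and> fst z \<le> x1 \<and> y0 \<le> snd z \<and> snd z \<le> y1"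
    and hc: "HC W" and vc: "VC W"
    and bf: "\<And>x. x0 \<le> x \<Longrightarrow> x \<le> x1 \<Longrightarrow> (x,y0) \<in> W"
    and tl: "x0 < tl" "tl < tr" "tr < x1"
    and topin: "\<And>x. tl \<le> x \<Longrightarrow> x \<le> tr \<Longrightarrow> (x,y1) \<in> W"
    and topsub: "\<And>z. z \<in> W \<Longrightarrow> snd z = y1 \<Longrightarrow> tl \<le> fst z \<and> fst z \<le> tr"
    and hL: "y0 < hL" "hL < y1"
    and leftin: "\<And>y. y0 \<le> y \<Longrightarrow> y \<le> hL \<Longrightarrow> (x0,y) \<in> W"
    and leftsub: "\<And>z. z \<in> W \<Longrightarrow> fst z = x0 \<Longrightarrow> snd z \<le> hL"
    and hR: "y0 < hR" "hR < y1"
    and rightin: "\<And>y. y0 \<le> y \<Longrightarrow> y \<le> hR \<Longrightarrow> (x1,y) \<in> W"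
    and rightsub: "\<And>z. z \<in> W \<Longrightarrow> fst z = x1 \<Longrightarrow> snd z \<le> hR"
    and ab: "snd a = y0" "snd b = y1" "closed_segment a b \<subseteq> W"
    and cd: "fst c = x0" "fst d = x1" "closed_segment c d \<subseteq> W"
begin

lemma hcI: "(p,y) \<in> W \<Longrightarrow> (q,y) \<in> W \<Longrightarrow> p \<le> x \<Longrightarrow> x \<le> q \<Longrightarrow> (x,y) \<in> W"
  using hc unfolding HC_def by blast
lemma vcI: "(x,p) \<in> W \<Longrightarrow> (x,q) \<in> W \<Longrightarrow> p \<le> y \<Longrightarrow> y \<le> q \<Longrightarrow> (x,y) \<in> W"
  using vc unfolding VC_def by blast

definition sx :: "real \<Rightarrow> real" where
  "sx t = fst a + (t - y0) * ((fst b - fst a) / (y1 - y0))"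
definition ty :: "real \<Rightarrow> real" where
  "ty s = snd c + (s - x0) * ((snd d - snd c) / (x1 - x0))"

lemma sx_seg: assumes "y0 \<le> t" "t \<le> y1" shows "(sx t, t) \<in> closed_segment a b"
proof -
  define u where "u = (t - y0) / (y1 - y0)"
  have u: "0 \<le> u" "u \<le> 1" using assms y01 by (auto simp: u_def field_simps)
  have "(sx t, t) = (1 - u) *\<^sub>R a + u *\<^sub>R b"
  proof -
    have "sx t = fst a + u * (fst b - fst a)" unfolding sx_def u_def by simp
    then have f: "sx t = (1 - u) * fst a + u * fst b" by (simp add: algebra_simps)
    have "u * (y1 - y0) = t - y0" unfolding u_def using y01 by simp
    then have s: "t = (1 - u) * snd a + u * snd b" unfolding ab by (simp add: algebra_simps)
    show ?thesis using f s by (simp add: prod_eq_iff)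
  qed
  then show ?thesis using u unfolding closed_segment_def by blast
qed

lemma ty_seg: assumes "x0 \<le> s" "s \<le> x1" shows "(s, ty s) \<in> closed_segment c d"
proof -
  define u where "u = (s - x0) / (x1 - x0)"
  have u: "0 \<le> u" "u \<le> 1" using assms x01 by (auto simp: u_def field_simps)
  have "(s, ty s) = (1 - u) *\<^sub>R c + u *\<^sub>R d"
  proof -
    have "ty s = snd c + u * (snd d - snd c)" unfolding ty_def u_def by simp
    then have f: "ty s = (1 - u) * snd c + u * snd d" by (simp add: algebra_simps)
    have "u * (x1 - x0) = s - x0" unfolding u_def using x01 by simp
    then have s: "s = (1 - u) * fst c + u * fst d" unfolding cd by (simp add: algebra_simps)
    show ?thesis using f s by (simp add: prod_eq_iff)
  qed
  then show ?thesis using u unfolding closed_segment_def by blast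
qed

lemma sx_W: "y0 \<le> t \<Longrightarrow> t \<le> y1 \<Longrightarrow> (sx t, t) \<in> W" using sx_seg ab(3) by blast
lemma ty_W: "x0 \<le> s \<Longrightarrow> s \<le> x1 \<Longrightarrow> (s, ty s) \<in> W" using ty_seg cd(3) by blast

lemma int_bounds: assumes "z \<in> interior W"
  shows "x0 < fst z" "fst z < x1" "y0 < snd z" "snd z < y1"
proof -
  obtain r where r: "r > 0" "\<And>x y. \<bar>x - fst z\<bar> < r \<Longrightarrow> \<bar>y - snd z\<bar> < r \<Longrightarrow> (x,y) \<in> W"
    using assms int_sq by blast
  have "(fst z - r/2, snd z) \<in> W" "(fst z + r/2, snd z) \<in> W" "(fst z, snd z - r/2) \<in> W" "(fst z, snd z + r/2) \<in> W"
    using r by auto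
  from box[OF this(1)] box[OF this(2)] box[OF this(3)] box[OF this(4)] r(1)
  show "x0 < fst z" "fst z < x1" "y0 < snd z" "snd z < y1" by auto
qed

lemma sx_diff: "sx s - sx t = (s - t) * ((fst b - fst a) / (y1 - y0))"
proof -
  have "\<And>M. fst a + (s - y0) * M - (fst a + (t - y0) * M) = (s - t) * (M::real)" by (simp add: algebra_simps)
  then show ?thesis unfolding sx_def by blast
qed
lemma ty_diff: "ty s - ty t = (s - t) * ((snd d - snd c) / (x1 - x0))"
proof -
  have "\<And>M. snd c + (s - x0) * M - (snd c + (t - x0) * M) = (s - t) * (M::real)" by (simp add: algebra_simps)
  then show ?thesis unfolding ty_def by blast
qed

lemma abs_mul_le: "\<bar>(s::real) - t\<bar> < e \<Longrightarrow> \<bar>(s - t) * m\<bar> \<le> e * \<bar>m\<bar>"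
  by (simp add: abs_mult mult_right_mono)

lemma Hcore_left:
  assumes u: "(ux,t) \<notin> interior W" and z: "(zx,t) \<in> interior W" and le: "ux \<le> zx"
  shows "\<not> sx t < ux"
proof
  assume lt: "sx t < ux"
  obtain r where r: "r > 0" "\<And>x y. \<bar>x - zx\<bar> < r \<Longrightarrow> \<bar>y - t\<bar> < r \<Longrightarrow> (x,y) \<in> W"
    using z int_sq by fastforce
  have tb: "y0 < t" "t < y1" using int_bounds[OF z] by auto
  have ltz: "ux < zx" using le u z by (cases "ux = zx") auto
  define m where "m = (fst b - fst a) / (y1 - y0)"
  define K where "K = \<bar>m\<bar>"
  define \<delta> where "\<delta> = ux - sx t"
  define e where "e = min (min r (min (t - y0) (y1 - t))) (min (zx - ux) (\<delta> / (K + 1)))"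
  have K0: "K \<ge> 0" unfolding K_def by simp
  have d0: "\<delta> > 0" using lt unfolding \<delta>_def by simp
  have e0: "e > 0" unfolding e_def using r(1) tb ltz d0 K0 by auto
  have eK: "e * (K + 1) \<le> \<delta>"
  proof -
    have "e \<le> \<delta> / (K + 1)" unfolding e_def by simp
    then show ?thesis using K0 by (simp add: le_divide_eq)
  qed
  obtain ex ey where ee: "\<bar>ex - ux\<bar> < e" "\<bar>ey - t\<bar> < e" "(ex,ey) \<notin> W"
    using not_int_sq[OF u e0] by auto
  have ey: "y0 \<le> ey" "ey \<le> y1" using ee(2) unfolding e_def by auto
  have s1: "(sx ey, ey) \<in> W" using sx_W ey by blast
  have s2: "(zx, ey) \<in> W" using r(2)[of zx ey] ee(2) r(1) unfolding e_def by auto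
  have "\<bar>(ey - t) * m\<bar> \<le> e * K" unfolding K_def by (rule abs_mul_le[OF ee(2)])
  then have "sx ey \<le> sx t + e * K" using sx_diff[of ey t] abs_ge_self[of "(ey - t) * m"] abs_ge_minus_self[of "(ey - t) * m"] unfolding m_def[symmetric] by linarith
  then have "sx ey \<le> ex" using eK ee(1) unfolding \<delta>_def by (simp add: algebra_simps) 
  moreover have "ex \<le> zx" using ee(1) unfolding e_def by auto
  ultimately have "(ex,ey) \<in> W" using hcI[OF s1 s2] by blast
  then show False using ee(3) by blast
qed

lemma Hcore_right:
  assumes u: "(ux,t) \<notin> interior W" and z: "(zx,t) \<in> interior W" and le: "zx \<le> ux"
  shows "\<not> sx t > ux"
proof
  assume lt: "sx t > ux"
  obtain r where r: "r > 0" "\<And>x y. \<bar>x - zx\<bar> < r \<Longrightarrow> \<bar>y - t\<bar> < r \<Longrightarrow> (x,y) \<in> W"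
    using z int_sq by fastforce
  have tb: "y0 < t" "t < y1" using int_bounds[OF z] by auto
  have ltz: "zx < ux" using le u z by (cases "ux = zx") auto
  define m where "m = (fst b - fst a) / (y1 - y0)"
  define K where "K = \<bar>m\<bar>"
  define \<delta> where "\<delta> = sx t - ux"
  define e where "e = min (min r (min (t - y0) (y1 - t))) (min (ux - zx) (\<delta> / (K + 1)))"
  have K0: "K \<ge> 0" unfolding K_def by simp
  have d0: "\<delta> > 0" using lt unfolding \<delta>_def by simp
  have e0: "e > 0" unfolding e_def using r(1) tb ltz d0 K0 by auto
  have eK: "e * (K + 1) \<le> \<delta>"
  proof -
    have "e \<le> \<delta> / (K + 1)" unfolding e_def by simp
    then show ?thesis using K0 by (simp add: le_divide_eq)
  qed
  obtain ex ey where ee: "\<bar>ex - ux\<bar> < e" "\<bar>ey - t\<bar> < e" "(ex,ey) \<notin> W"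
    using not_int_sq[OF u e0] by auto
  have ey: "y0 \<le> ey" "ey \<le> y1" using ee(2) unfolding e_def by auto
  have s1: "(sx ey, ey) \<in> W" using sx_W ey by blast
  have s2: "(zx, ey) \<in> W" using r(2)[of zx ey] ee(2) r(1) unfolding e_def by auto
  have "\<bar>(ey - t) * m\<bar> \<le> e * K" unfolding K_def by (rule abs_mul_le[OF ee(2)])
  then have "sx ey \<ge> sx t - e * K" using sx_diff[of ey t] abs_ge_self[of "(ey - t) * m"] abs_ge_minus_self[of "(ey - t) * m"] unfolding m_def[symmetric] by linarith
  then have "sx ey \<ge> ex" using eK ee(1) unfolding \<delta>_def by (simp add: algebra_simps) 
  moreover have "zx \<le> ex" using ee(1) unfolding e_def by auto
  ultimately have "(ex,ey) \<in> W" using hcI[OF s2 s1] by blast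
  then show False using ee(3) by blast
qed

lemma Vcore_low:
  assumes u: "(t,uy) \<notin> interior W" and z: "(t,zy) \<in> interior W" and le: "uy \<le> zy"
  shows "\<not> ty t < uy"
proof
  assume lt: "ty t < uy"
  obtain r where r: "r > 0" "\<And>x y. \<bar>x - t\<bar> < r \<Longrightarrow> \<bar>y - zy\<bar> < r \<Longrightarrow> (x,y) \<in> W"
    using z int_sq by fastforce
  have tb: "x0 < t" "t < x1" using int_bounds[OF z] by auto
  have ltz: "uy < zy" using le u z by (cases "uy = zy") auto
  define m where "m = (snd d - snd c) / (x1 - x0)"
  define K where "K = \<bar>m\<bar>"
  define \<delta> where "\<delta> = uy - ty t"
  define e where "e = min (min r (min (t - x0) (x1 - t))) (min (zy - uy) (\<delta> / (K + 1)))"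
  have K0: "K \<ge> 0" unfolding K_def by simp
  have d0: "\<delta> > 0" using lt unfolding \<delta>_def by simp
  have e0: "e > 0" unfolding e_def using r(1) tb ltz d0 K0 by auto
  have eK: "e * (K + 1) \<le> \<delta>"
  proof -
    have "e \<le> \<delta> / (K + 1)" unfolding e_def by simp
    then show ?thesis using K0 by (simp add: le_divide_eq)
  qed
  obtain ex ey where ee: "\<bar>ex - t\<bar> < e" "\<bar>ey - uy\<bar> < e" "(ex,ey) \<notin> W"
    using not_int_sq[OF u e0] by auto
  have ex: "x0 \<le> ex" "ex \<le> x1" using ee(1) unfolding e_def by auto
  have s1: "(ex, ty ex) \<in> W" using ty_W ex by blast
  have s2: "(ex, zy) \<in> W" using r(2)[of ex zy] ee(1) r(1) unfolding e_def by auto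
  have "\<bar>(ex - t) * m\<bar> \<le> e * K" unfolding K_def by (rule abs_mul_le[OF ee(1)])
  then have "ty ex \<le> ty t + e * K" using ty_diff[of ex t] abs_ge_self[of "(ex - t) * m"] abs_ge_minus_self[of "(ex - t) * m"] unfolding m_def[symmetric] by linarith
  then have "ty ex \<le> ey" using eK ee(2) unfolding \<delta>_def by (simp add: algebra_simps) 
  moreover have "ey \<le> zy" using ee(2) unfolding e_def by auto
  ultimately have "(ex,ey) \<in> W" using vcI[OF s1 s2] by blast
  then show False using ee(3) by blast
qed

lemma Vcore_high:
  assumes u: "(t,uy) \<notin> interior W" and z: "(t,zy) \<in> interior W" and le: "zy \<le> uy"
  shows "\<not> ty t > uy"
proof
  assume lt: "ty t > uy"
  obtain r where r: "r > 0" "\<And>x y. \<bar>x - t\<bar> < r \<Longrightarrow> \<bar>y - zy\<bar> < r \<Longrightarrow> (x,y) \<in> W"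
    using z int_sq by fastforce
  have tb: "x0 < t" "t < x1" using int_bounds[OF z] by auto
  have ltz: "zy < uy" using le u z by (cases "uy = zy") auto
  define m where "m = (snd d - snd c) / (x1 - x0)"
  define K where "K = \<bar>m\<bar>"
  define \<delta> where "\<delta> = ty t - uy"
  define e where "e = min (min r (min (t - x0) (x1 - t))) (min (uy - zy) (\<delta> / (K + 1)))"
  have K0: "K \<ge> 0" unfolding K_def by simp
  have d0: "\<delta> > 0" using lt unfolding \<delta>_def by simp
  have e0: "e > 0" unfolding e_def using r(1) tb ltz d0 K0 by auto
  have eK: "e * (K + 1) \<le> \<delta>"
  proof -
    have "e \<le> \<delta> / (K + 1)" unfolding e_def by simp
    then show ?thesis using K0 by (simp add: le_divide_eq)
  qed
  obtain ex ey where ee: "\<bar>ex - t\<bar> < e" "\<bar>ey - uy\<bar> < e" "(ex,ey) \<notin> W"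
    using not_int_sq[OF u e0] by auto
  have ex: "x0 \<le> ex" "ex \<le> x1" using ee(1) unfolding e_def by auto
  have s1: "(ex, ty ex) \<in> W" using ty_W ex by blast
  have s2: "(ex, zy) \<in> W" using r(2)[of ex zy] ee(1) r(1) unfolding e_def by auto
  have "\<bar>(ex - t) * m\<bar> \<le> e * K" unfolding K_def by (rule abs_mul_le[OF ee(1)])
  then have "ty ex \<ge> ty t - e * K" using ty_diff[of ex t] abs_ge_self[of "(ex - t) * m"] abs_ge_minus_self[of "(ex - t) * m"] unfolding m_def[symmetric] by linarith
  then have "ty ex \<ge> ey" using eK ee(2) unfolding \<delta>_def by (simp add: algebra_simps) 
  moreover have "zy \<le> ey" using ee(2) unfolding e_def by auto
  ultimately have "(ex,ey) \<in> W" using vcI[OF s2 s1] by blast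
  then show False using ee(3) by blast
qed

lemma lemH:
  assumes u: "(ux,t) \<notin> interior W" and w: "(wx,t) \<notin> interior W"
    and z: "z \<in> closed_segment (ux,t) (wx,t)" "z \<in> interior W"
  shows "(sx t, t) \<in> closed_segment (ux,t) (wx,t)"
proof -
  obtain zx zy where zz: "z = (zx,zy)" by (cases z)
  have zy: "zy = t" "min ux wx \<le> zx" "zx \<le> max ux wx" using z(1) unfolding zz hseg_mem by auto
  have zi: "(zx,t) \<in> interior W" using z(2) zz zy by simp
  show ?thesis
  proof (cases "ux \<le> wx")
    case True
    then have "\<not> sx t < ux" "\<not> sx t > wx"
      using Hcore_left[OF u zi] Hcore_right[OF w zi] zy by auto
    then have "min ux wx \<le> sx t \<and> sx t \<le> max ux wx" using True by (auto simp: min_def max_def)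
    then show ?thesis by (simp add: hseg_mem)
  next
    case False
    then have "\<not> sx t < wx" "\<not> sx t > ux"
      using Hcore_left[OF w zi] Hcore_right[OF u zi] zy by auto
    then have "min ux wx \<le> sx t \<and> sx t \<le> max ux wx" using False by (auto simp: min_def max_def)
    then show ?thesis by (simp add: hseg_mem)
  qed
qed

lemma lemV:
  assumes u: "(t,uy) \<notin> interior W" and w: "(t,wy) \<notin> interior W"
    and z: "z \<in> closed_segment (t,uy) (t,wy)" "z \<in> interior W"
  shows "(t, ty t) \<in> closed_segment (t,uy) (t,wy)"
proof -
  obtain zx zy where zz: "z = (zx,zy)" by (cases z)
  have zy: "zx = t" "min uy wy \<le> zy" "zy \<le> max uy wy" using z(1) unfolding zz vseg_mem by auto
  have zi: "(t,zy) \<in> interior W" using z(2) zz zy by simp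
  show ?thesis
  proof (cases "uy \<le> wy")
    case True
    then have "\<not> ty t < uy" "\<not> ty t > wy"
      using Vcore_low[OF u zi] Vcore_high[OF w zi] zy by auto
    then have "min uy wy \<le> ty t \<and> ty t \<le> max uy wy" using True by (auto simp: min_def max_def)
    then show ?thesis by (simp add: vseg_mem)
  next
    case False
    then have "\<not> ty t < wy" "\<not> ty t > uy"
      using Vcore_low[OF w zi] Vcore_high[OF u zi] zy by auto
    then have "min uy wy \<le> ty t \<and> ty t \<le> max uy wy" using False by (auto simp: min_def max_def)
    then show ?thesis by (simp add: vseg_mem)
  qed
qed

lemma DC: assumes z: "(x,y') \<in> interior W" and y: "y0 < y" "y \<le> y'"
  shows "(x,y) \<in> interior W"
proof -
  obtain r where r: "r > 0" "\<And>x2 y2. \<bar>x2 - x\<bar> < r \<Longrightarrow> \<bar>y2 - y'\<bar> < r \<Longrightarrow> (x2,y2) \<in> W"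
    using z int_sq by fastforce
  define e where "e = min r (y - y0)"
  have e0: "e > 0" using r(1) y unfolding e_def by auto
  have er: "e \<le> r" "e \<le> y - y0" unfolding e_def by simp_all
  have "\<forall>x2 y2. \<bar>x2 - x\<bar> < e \<longrightarrow> \<bar>y2 - y\<bar> < e \<longrightarrow> (x2,y2) \<in> W"
  proof (intro allI impI)
    fix x2 y2 assume h: "\<bar>x2 - x\<bar> < e" "\<bar>y2 - y\<bar> < e"
    have h1: "\<bar>x2 - x\<bar> < r" using h(1) er by linarith
    have top: "(x2, y') \<in> W" using r(2)[OF h1] r(1) by simp
    show "(x2,y2) \<in> W"
    proof (cases "y2 \<le> y'")
      case True
      have bx: "x0 \<le> x2" "x2 \<le> x1" using box[OF top] by auto
      have "(x2, y0) \<in> W" using bf[OF bx] .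
      moreover have "y0 \<le> y2" using h(2) er by linarith
      ultimately show ?thesis using vcI[OF _ top] True by blast
    next
      case False
      have "\<bar>y2 - y'\<bar> < r" using False h(2) er y by linarith
      then show ?thesis using r(2)[OF h1] by blast
    qed
  qed
  then have "\<exists>e>0. \<forall>x2 y2. \<bar>x2 - fst (x,y)\<bar> < e \<longrightarrow> \<bar>y2 - snd (x,y)\<bar> < e \<longrightarrow> (x2,y2) \<in> W"
    using e0 by auto
  then show ?thesis using int_sq[of "(x,y)" W] by blast
qed

lemma sx_cont: "isCont sx t" unfolding sx_def by (intro continuous_intros)
lemma ty_cont: "isCont ty t" unfolding ty_def by (intro continuous_intros)

end

definition P1 :: "pt \<Rightarrow> pt \<Rightarrow> pt set" where
  "P1 p q = closed_segment p (fst q, snd p) \<union> closed_segment (fst q, snd p) q"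

lemma L_paths_P1: "L_paths p q = {P1 p q, P1 q p}"
proof -
  have "closed_segment p (fst p, snd q) \<union> closed_segment (fst p, snd q) q = P1 q p"
    unfolding P1_def by (simp add: closed_segment_commute Un_commute)
  then show ?thesis unfolding L_paths_def P1_def by simp
qed

context bot begin

lemma cover:
  assumes p: "(px,py) \<notin> interior W" and q: "(qx,qy) \<notin> interior W"
   and i1: "P1 (px,py) (qx,qy) \<inter> interior W \<noteq> {}" and i2: "P1 (qx,qy) (px,py) \<inter> interior W \<noteq> {}"
  shows "P1 (px,py) (qx,qy) \<inter> (closed_segment a b \<union> closed_segment c d) \<noteq> {}"
proof -
  have P1e: "P1 (px,py) (qx,qy) = closed_segment (px,py) (qx,py) \<union> closed_segment (qx,py) (qx,qy)"
    by (simp add: P1_def)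
  have P2e: "P1 (qx,qy) (px,py) = closed_segment (qx,qy) (px,qy) \<union> closed_segment (px,qy) (px,py)"
    by (simp add: P1_def)
  have hitH: "P1 (px,py) (qx,qy) \<inter> (closed_segment a b \<union> closed_segment c d) \<noteq> {}"
    if "y0 \<le> y" "y \<le> y1" "(sx y, y) \<in> P1 (px,py) (qx,qy)" for y
    using sx_seg[OF that(1,2)] that(3) by blast
  have hitV: "P1 (px,py) (qx,qy) \<inter> (closed_segment a b \<union> closed_segment c d) \<noteq> {}"
    if "x0 \<le> x" "x \<le> x1" "(x, ty x) \<in> P1 (px,py) (qx,qy)" for x
    using ty_seg[OF that(1,2)] that(3) by blast
  show ?thesis
  proof (cases "(qx,py) \<in> interior W")
    case False
    from i1 obtain z where z: "z \<in> P1 (px,py) (qx,qy)" "z \<in> interior W" by blast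
    obtain zx zy where zz: "z = (zx,zy)" by (cases z)
    from z(1) consider "z \<in> closed_segment (px,py) (qx,py)" | "z \<in> closed_segment (qx,py) (qx,qy)"
      unfolding P1e by blast
    then show ?thesis
    proof cases
      case 1
      have s: "(sx py, py) \<in> closed_segment (px,py) (qx,py)" by (rule lemH[OF p False 1 z(2)])
      have "zy = py" using 1 unfolding zz hseg_mem by simp
      then have "y0 \<le> py" "py \<le> y1" using int_bounds[OF z(2)] zz by auto
      then show ?thesis using hitH s P1e by blast
    next
      case 2
      have s: "(qx, ty qx) \<in> closed_segment (qx,py) (qx,qy)" by (rule lemV[OF False q 2 z(2)])
      have "zx = qx" using 2 unfolding zz vseg_mem by simp
      then have "x0 \<le> qx" "qx \<le> x1" using int_bounds[OF z(2)] zz by auto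
      then show ?thesis using hitV s P1e by blast
    qed
  next
    case True
    note r1 = True
    have rb: "x0 < qx" "qx < x1" "y0 < py" "py < y1" using int_bounds[OF r1] by auto
    have pq: "px \<noteq> qx" using p r1 by auto
    have qpy: "qy \<noteq> py" using q r1 by auto
    show ?thesis
    proof (cases "qy > py")
      case True
      have A: "(px,y) \<notin> interior W" if "py \<le> y" "y \<le> qy" for y
        using DC[of px y py] rb(3) that p by auto
      have r2n: "(px,qy) \<notin> interior W" using A True by simp
      have seg2: "z \<notin> interior W" if "z \<in> closed_segment (px,qy) (px,py)" for z
      proof -
        obtain zx zy where zz: "z = (zx,zy)" by (cases z)
        have "zx = px" "py \<le> zy" "zy \<le> qy" using that True unfolding zz vseg_mem by auto
        then show ?thesis using A zz by simp
      qed
      from i2 obtain z where z: "z \<in> closed_segment (qx,qy) (px,qy)" "z \<in> interior W"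
        unfolding P2e using seg2 by blast
      have s2: "(sx qy, qy) \<in> closed_segment (qx,qy) (px,qy)" by (rule lemH[OF q r2n z])
      then have s2': "min qx px \<le> sx qy" "sx qy \<le> max qx px" unfolding hseg_mem by auto
      obtain zx zy where zz: "z = (zx,zy)" by (cases z)
      have "zy = qy" using z(1) unfolding zz hseg_mem by simp
      then have qyb: "y0 < qy" "qy < y1" using int_bounds[OF z(2)] zz by auto
      have hit_mid: "P1 (px,py) (qx,qy) \<inter> (closed_segment a b \<union> closed_segment c d) \<noteq> {}"
        if "sx py \<le> sx qy \<and> sx py \<le> qx \<and> qx \<le> sx qy \<or> sx qy \<le> sx py \<and> sx qy \<le> qx \<and> qx \<le> sx py"
      proof -
        have "\<exists>y. py \<le> y \<and> y \<le> qy \<and> sx y = qx"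
          using that
        proof
          assume h: "sx py \<le> sx qy \<and> sx py \<le> qx \<and> qx \<le> sx qy"
          show ?thesis using IVT[of sx py qx qy] h True sx_cont by auto
        next
          assume h: "sx qy \<le> sx py \<and> sx qy \<le> qx \<and> qx \<le> sx py"
          show ?thesis using IVT2[of sx qy qx py] h True sx_cont by auto
        qed
        then obtain y where y: "py \<le> y" "y \<le> qy" "sx y = qx" by blast
        have "(sx y, y) \<in> closed_segment (qx,py) (qx,qy)" using y True unfolding vseg_mem by auto
        then show ?thesis using hitH[of y] y rb qyb P1e by auto
      qed
      show ?thesis
      proof (cases "px < qx")
        case True
        have n: "\<not> sx py < px" using Hcore_left[OF p r1] True by simp
        show ?thesis
        proof (cases "sx py \<le> qx")
          case True
          have "(sx py, py) \<in> closed_segment (px,py) (qx,py)" using n True unfolding hseg_mem by auto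
          then show ?thesis using hitH[of py] rb P1e by auto
        next
          case False
          then show ?thesis using hit_mid s2' \<open>px < qx\<close> by auto
        qed
      next
        case False
        have n: "\<not> sx py > px" using Hcore_right[OF p r1] False by simp
        show ?thesis
        proof (cases "sx py \<ge> qx")
          case True
          have "(sx py, py) \<in> closed_segment (px,py) (qx,py)" using n True unfolding hseg_mem by auto
          then show ?thesis using hitH[of py] rb P1e by auto
        next
          case F2: False
          then show ?thesis using hit_mid s2' False by auto
        qed
      qed
    next
      case False
      then have qlt: "qy < py" using qpy by simp
      have qy0: "qy \<le> y0"
      proof (rule ccontr)
        assume "\<not> qy \<le> y0"
        then have "(qx,qy) \<in> interior W" using DC[OF r1, of qy] qlt by auto
        then show False using q by simp
      qed
      have seg1: "z \<notin> interior W" if "z \<in> closed_segment (qx,qy) (px,qy)" for z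
      proof -
        obtain zx zy where zz: "z = (zx,zy)" by (cases z)
        have "zy = qy" using that unfolding zz hseg_mem by auto
        then show ?thesis using int_bounds[of z] zz qy0 by auto
      qed
      have r2n: "(px,qy) \<notin> interior W" using int_bounds[of "(px,qy)"] qy0 by auto
      from i2 obtain z where z: "z \<in> closed_segment (px,qy) (px,py)" "z \<in> interior W"
        unfolding P2e using seg1 by blast
      have s2: "(px, ty px) \<in> closed_segment (px,qy) (px,py)" by (rule lemV[OF r2n p z])
      then have s2': "ty px \<le> py" unfolding vseg_mem using qlt by auto
      obtain zx zy where zz: "z = (zx,zy)" by (cases z)
      have "zx = px" using z(1) unfolding zz vseg_mem by simp
      then have pxb: "x0 < px" "px < x1" using int_bounds[OF z(2)] zz by auto
      have tq: "y0 \<le> ty qx" using box[OF ty_W[of qx]] rb by auto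
      show ?thesis
      proof (cases "ty qx \<le> py")
        case True
        have "(qx, ty qx) \<in> closed_segment (qx,py) (qx,qy)" using True tq qy0 unfolding vseg_mem by auto
        then show ?thesis using hitV[of qx] rb P1e by auto
      next
        case False
        have "\<exists>x. min px qx \<le> x \<and> x \<le> max px qx \<and> ty x = py"
        proof (cases "px < qx")
          case True
          then show ?thesis using IVT[of ty px py qx] s2' False ty_cont by auto
        next
          case F2: False
          then show ?thesis using IVT2[of ty px py qx] s2' False ty_cont by auto
        qed
        then obtain x where x: "min px qx \<le> x" "x \<le> max px qx" "ty x = py" by blast
        have "(x, ty x) \<in> closed_segment (px,py) (qx,py)" using x unfolding hseg_mem by auto
        moreover have "x0 \<le> x" "x \<le> x1" using x pxb rb by auto
        ultimately show ?thesis using hitV[of x] P1e by auto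
      qed
    qed
  qed
qed

end

lemma seg_coord: assumes "(z::pt) \<in> closed_segment u v"
  shows "min (fst u) (fst v) \<le> fst z" "fst z \<le> max (fst u) (fst v)"
        "min (snd u) (snd v) \<le> snd z" "snd z \<le> max (snd u) (snd v)"
proof -
  have "fst z \<in> closed_segment (fst u) (fst v) \<and> snd z \<in> closed_segment (snd u) (snd v)"
    using closed_segment_PairD[of "fst z" "snd z" "fst u" "snd u" "fst v" "snd v"] assms by simp
  then show "min (fst u) (fst v) \<le> fst z" "fst z \<le> max (fst u) (fst v)"
        "min (snd u) (snd v) \<le> snd z" "snd z \<le> max (snd u) (snd v)"
    unfolding closed_segment_eq_real_ivl by (auto split: if_splits)
qed

lemma L_paths_h: assumes "snd p = snd q" shows "L_paths p q = {closed_segment p q}"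
proof -
  have e1: "(fst q, snd p) = q" using assms by (simp add: prod_eq_iff)
  have e2: "(fst p, snd q) = p" using assms by (simp add: prod_eq_iff)
  have u1: "closed_segment p q \<union> closed_segment q q = closed_segment p q" using ends_in_segment by auto
  have u2: "closed_segment p p \<union> closed_segment p q = closed_segment p q" using ends_in_segment by auto
  show ?thesis unfolding L_paths_def e1 e2 u1 u2 by simp
qed

lemma L_paths_v: assumes "fst p = fst q" shows "L_paths p q = {closed_segment p q}"
proof -
  have e1: "(fst q, snd p) = p" using assms by (simp add: prod_eq_iff)
  have e2: "(fst p, snd q) = q" using assms by (simp add: prod_eq_iff)
  have u1: "closed_segment p q \<union> closed_segment q q = closed_segment p q" using ends_in_segment by auto
  have u2: "closed_segment p p \<union> closed_segment p q = closed_segment p q" using ends_in_segment by auto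
  show ?thesis unfolding L_paths_def e1 e2 u1 u2 by simp
qed

lemma skel_chord: assumes "skeleton W S" "p \<notin> interior W" "q \<notin> interior W"
  "snd p = snd q \<or> fst p = fst q" "z \<in> closed_segment p q" "z \<in> interior W"
  shows "\<exists>s\<in>S. closed_segment p q \<inter> s \<noteq> {}"
proof -
  have L: "L_paths p q = {closed_segment p q}" using assms(4) L_paths_h L_paths_v by blast
  have "\<forall>P\<in>L_paths p q. P \<inter> interior W \<noteq> {}" unfolding L using assms(5,6) by blast
  then have "\<forall>P\<in>L_paths p q. \<exists>s\<in>S. P \<inter> s \<noteq> {}"
    using assms(1-3) unfolding skeleton_def by blast
  then show ?thesis unfolding L by simp
qed

context bot begin

lemma rectT: "tl \<le> x \<Longrightarrow> x \<le> tr \<Longrightarrow> y0 \<le> y \<Longrightarrow> y \<le> y1 \<Longrightarrow> (x,y) \<in> W"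
proof -
  assume h: "tl \<le> x" "x \<le> tr" "y0 \<le> y" "y \<le> y1"
  have "(x,y0) \<in> W" using h tl by (intro bf) auto
  moreover have "(x,y1) \<in> W" using h by (intro topin) auto
  ultimately show ?thesis using vcI h by blast
qed

lemma rectL: "x0 \<le> x \<Longrightarrow> x \<le> tl \<Longrightarrow> y0 \<le> y \<Longrightarrow> y \<le> hL \<Longrightarrow> (x,y) \<in> W"
proof -
  assume h: "x0 \<le> x" "x \<le> tl" "y0 \<le> y" "y \<le> hL"
  have "(x0,y) \<in> W" using h by (intro leftin) auto
  moreover have "(tl,y) \<in> W" using h tl hL by (intro rectT) auto
  ultimately show ?thesis using hcI h by blast
qed

lemma rectR: "tr \<le> x \<Longrightarrow> x \<le> x1 \<Longrightarrow> y0 \<le> y \<Longrightarrow> y \<le> hR \<Longrightarrow> (x,y) \<in> W"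
proof -
  assume h: "tr \<le> x" "x \<le> x1" "y0 \<le> y" "y \<le> hR"
  have "(x1,y) \<in> W" using h by (intro rightin) auto
  moreover have "(tr,y) \<in> W" using h tl hR by (intro rectT) auto
  ultimately show ?thesis using hcI h by blast
qed

lemma intT: assumes "y0 < t" "t < y1" shows "((tl+tr)/2, t) \<in> interior W"
proof -
  define e where "e = min (min ((tr - tl)/2) (t - y0)) (y1 - t)"
  have e0: "e > 0" using assms tl unfolding e_def by auto
  have "\<forall>x y. \<bar>x - fst ((tl+tr)/2, t)\<bar> < e \<longrightarrow> \<bar>y - snd ((tl+tr)/2, t)\<bar> < e \<longrightarrow> (x,y) \<in> W"
  proof (intro allI impI)
    fix x y assume h: "\<bar>x - fst ((tl+tr)/2, t)\<bar> < e" "\<bar>y - snd ((tl+tr)/2, t)\<bar> < e"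
    have "e \<le> (tr - tl)/2" "e \<le> t - y0" "e \<le> y1 - t" unfolding e_def by (metis min.cobounded1 min.cobounded2 order.trans)+
    note eb = this
    have hx: "(tl+tr)/2 - e < x" "x < (tl+tr)/2 + e" "t - e < y" "y < t + e" using h by (auto simp: abs_less_iff)
    have "tl \<le> x" "x \<le> tr" "y0 \<le> y" "y \<le> y1" using hx eb by argo+
    then show "(x,y) \<in> W" by (rule rectT)
  qed
  then show ?thesis using e0 int_sq[of "((tl+tr)/2, t)" W] by blast
qed

lemma intL: assumes "x0 < t" "t < tl" shows "(t, (y0+hL)/2) \<in> interior W"
proof -
  define e where "e = min (min (t - x0) (tl - t)) ((hL - y0)/2)"
  have e0: "e > 0" using assms hL unfolding e_def by auto
  have "\<forall>x y. \<bar>x - fst (t, (y0+hL)/2)\<bar> < e \<longrightarrow> \<bar>y - snd (t, (y0+hL)/2)\<bar> < e \<longrightarrow> (x,y) \<in> W"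
  proof (intro allI impI)
    fix x y assume h: "\<bar>x - fst (t, (y0+hL)/2)\<bar> < e" "\<bar>y - snd (t, (y0+hL)/2)\<bar> < e"
    have "e \<le> t - x0" "e \<le> tl - t" "e \<le> (hL - y0)/2" unfolding e_def by (metis min.cobounded1 min.cobounded2 order.trans)+
    note eb = this
    have hx: "t - e < x" "x < t + e" "(y0+hL)/2 - e < y" "y < (y0+hL)/2 + e" using h by (auto simp: abs_less_iff)
    have "x0 \<le> x" "x \<le> tl" "y0 \<le> y" "y \<le> hL" using hx eb by argo+
    then show "(x,y) \<in> W" by (rule rectL)
  qed
  then show ?thesis using e0 int_sq[of "(t, (y0+hL)/2)" W] by blast
qed

lemma intR: assumes "tr < t" "t < x1" shows "(t, (y0+hR)/2) \<in> interior W"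
proof -
  define e where "e = min (min (t - tr) (x1 - t)) ((hR - y0)/2)"
  have e0: "e > 0" using assms hR unfolding e_def by auto
  have "\<forall>x y. \<bar>x - fst (t, (y0+hR)/2)\<bar> < e \<longrightarrow> \<bar>y - snd (t, (y0+hR)/2)\<bar> < e \<longrightarrow> (x,y) \<in> W"
  proof (intro allI impI)
    fix x y assume h: "\<bar>x - fst (t, (y0+hR)/2)\<bar> < e" "\<bar>y - snd (t, (y0+hR)/2)\<bar> < e"
    have "e \<le> t - tr" "e \<le> x1 - t" "e \<le> (hR - y0)/2" unfolding e_def by (metis min.cobounded1 min.cobounded2 order.trans)+
    note eb = this
    have hx: "t - e < x" "x < t + e" "(y0+hR)/2 - e < y" "y < (y0+hR)/2 + e" using h by (auto simp: abs_less_iff)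
    have "tr \<le> x" "x \<le> x1" "y0 \<le> y" "y \<le> hR" using hx eb by argo+
    then show "(x,y) \<in> W" by (rule rectR)
  qed
  then show ?thesis using e0 int_sq[of "(t, (y0+hR)/2)" W] by blast
qed

lemma outside_noint: assumes "fst z < x0 \<or> fst z > x1 \<or> snd z < y0 \<or> snd z > y1" shows "z \<notin> interior W"
proof
  assume "z \<in> interior W"
  then have "z \<in> W" using interior_subset by blast
  from box[OF this] show False using assms by auto
qed

lemma hchord: assumes "skeleton W S" "y0 < t" "t < y1"
  shows "\<exists>s\<in>S. \<exists>z\<in>s. snd z = t"
proof -
  have "\<exists>s\<in>S. closed_segment (x0-1,t) (x1+1,t) \<inter> s \<noteq> {}"
  proof (rule skel_chord[OF assms(1)])
    show "(x0-1,t) \<notin> interior W" "(x1+1,t) \<notin> interior W"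
      using outside_noint[of "(x0-1,t)"] outside_noint[of "(x1+1,t)"] by simp_all
    show "((tl+tr)/2, t) \<in> closed_segment (x0-1,t) (x1+1,t)" unfolding hseg_mem using tl by auto
    show "((tl+tr)/2, t) \<in> interior W" by (rule intT) fact+
  qed simp
  then show ?thesis unfolding hseg_mem by (force simp: hseg_mem)
qed

lemma vchord: assumes "skeleton W S" "(x0 < t \<and> t < tl) \<or> (tr < t \<and> t < x1)"
  shows "\<exists>s\<in>S. \<exists>z\<in>s. fst z = t"
proof -
  obtain h where h: "(t,h) \<in> interior W" using intL intR assms(2) by blast
  have "\<exists>s\<in>S. closed_segment (t,y0-1) (t,y1+1) \<inter> s \<noteq> {}"
  proof (rule skel_chord[OF assms(1)])
    show "(t,y0-1) \<notin> interior W" "(t,y1+1) \<notin> interior W"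
      using outside_noint[of "(t,y0-1)"] outside_noint[of "(t,y1+1)"] by simp_all
    show "(t,h) \<in> interior W" by fact
    show "(t,h) \<in> closed_segment (t,y0-1) (t,y1+1)" unfolding vseg_mem using int_bounds[OF h] by auto
  qed simp
  then show ?thesis by (force simp: vseg_mem)
qed

lemma no_small_skel: assumes sk: "skeleton W S" and fin: "finite S" and c: "card S \<le> 1"
  shows False
proof (cases "S = {}")
  case True
  show False using hchord[OF sk, of "(y0+y1)/2"] y01 True by auto
next
  case False
  then obtain s where S: "S = {s}" using c fin
    by (metis One_nat_def card_0_eq card_le_Suc0_iff_eq insertI1 le_zero_eq singletonI subsetI subset_singletonD)
  have segs: "is_segment s" "s \<subseteq> W" using sk unfolding skeleton_def S by auto
  then obtain A B where AB: "s = closed_segment A B" unfolding is_segment_def by blast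
  have cs: "compact s" "s \<noteq> {}" unfolding AB by auto
  have cf: "continuous_on s (\<lambda>x. fst x)" "continuous_on s (\<lambda>x. snd x)" by (intro continuous_intros)+
  obtain m1 where m1: "m1 \<in> s" "\<And>y. y \<in> s \<Longrightarrow> snd y \<le> snd m1"
    using continuous_attains_sup[OF cs cf(2)] by blast
  obtain m2 where m2: "m2 \<in> s" "\<And>y. y \<in> s \<Longrightarrow> fst m2 \<le> fst y"
    using continuous_attains_inf[OF cs cf(1)] by blast
  obtain m3 where m3: "m3 \<in> s" "\<And>y. y \<in> s \<Longrightarrow> fst y \<le> fst m3"
    using continuous_attains_sup[OF cs cf(1)] by blast
  have "m1 \<in> W" "m2 \<in> W" "m3 \<in> W" using m1(1) m2(1) m3(1) segs(2) by auto
  then have b1: "snd m1 \<le> y1" "fst m2 \<ge> x0" "fst m3 \<le> x1" using box by blast+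
  have e1: "snd m1 = y1"
  proof (rule ccontr)
    assume "snd m1 \<noteq> y1"
    then have lt: "snd m1 < y1" using b1 by simp
    define t where "t = (max (snd m1) y0 + y1)/2"
    have "y0 < t" "t < y1" "snd m1 < t" using lt y01 unfolding t_def by auto
    then show False using hchord[OF sk, of t] m1(2) S by force
  qed
  have e2: "fst m2 = x0"
  proof (rule ccontr)
    assume "fst m2 \<noteq> x0"
    then have lt: "x0 < fst m2" using b1 by simp
    define t where "t = (x0 + min (fst m2) tl)/2"
    have "x0 < t" "t < tl" "t < fst m2" using lt tl unfolding t_def by auto
    then show False using vchord[OF sk, of t] m2(2) S by force
  qed
  have e3: "fst m3 = x1"
  proof (rule ccontr)
    assume "fst m3 \<noteq> x1"
    then have lt: "fst m3 < x1" using b1 by simp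
    define t where "t = (max (fst m3) tr + x1)/2"
    have "tr < t" "t < x1" "fst m3 < t" using lt tl unfolding t_def by auto
    then show False using vchord[OF sk, of t] m3(2) S by force
  qed
  have f1: "tl \<le> fst m1" "fst m1 \<le> tr" using topsub[OF _ e1] m1(1) segs(2) by auto
  have f2: "snd m2 \<le> hL" using leftsub[OF _ e2] m2(1) segs(2) by auto
  have f3: "snd m3 \<le> hR" using rightsub[OF _ e3] m3(1) segs(2) by auto
  have "collinear {m1, m2, m3}"
    by (rule collinear_subset[OF collinear_closed_segment[of A B]]) (use m1 m2 m3 AB in auto)
  then consider "m1 \<in> closed_segment m2 m3" | "m2 \<in> closed_segment m3 m1" | "m3 \<in> closed_segment m1 m2"
    unfolding collinear_between_cases between_mem_segment by blast
  then show False
  proof cases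
    case 1
    from seg_coord(4)[OF 1] show False using e1 f2 f3 hL hR by auto
  next
    case 2
    from seg_coord(1)[OF 2] show False using e2 e3 f1 tl x01 by auto
  next
    case 3
    from seg_coord(2)[OF 3] show False using e2 e3 f1 tl x01 by auto
  qed
qed

theorem main: "minimum_skeleton W {closed_segment a b, closed_segment c d}"
proof -
  have sk: "skeleton W {closed_segment a b, closed_segment c d}"
    unfolding skeleton_def
  proof (intro conjI allI impI)
    have "a \<noteq> b" using ab y01 by auto
    moreover have "c \<noteq> d" using cd x01 by auto
    ultimately have "is_segment (closed_segment a b)" "is_segment (closed_segment c d)"
      unfolding is_segment_def by blast+
    then show "\<forall>s\<in>{closed_segment a b, closed_segment c d}. is_segment s" by blast
    show "\<Union> {closed_segment a b, closed_segment c d} \<subseteq> W" using ab cd by auto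
    fix p q assume h: "p \<notin> interior W \<and> q \<notin> interior W \<and> (\<forall>P\<in>L_paths p q. P \<inter> interior W \<noteq> {})"
    obtain px py where pp: "p = (px,py)" by (cases p)
    obtain qx qy where qq: "q = (qx,qy)" by (cases q)
    have i: "P1 p q \<inter> interior W \<noteq> {}" "P1 q p \<inter> interior W \<noteq> {}" using h unfolding L_paths_P1 by auto
    have c1: "P1 p q \<inter> (closed_segment a b \<union> closed_segment c d) \<noteq> {}"
      using cover[of px py qx qy] h i pp qq by simp
    have c2: "P1 q p \<inter> (closed_segment a b \<union> closed_segment c d) \<noteq> {}"
      using cover[of qx qy px py] h i pp qq by simp
    show "\<forall>P\<in>L_paths p q. \<exists>s\<in>{closed_segment a b, closed_segment c d}. P \<inter> s \<noteq> {}"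
      unfolding L_paths_P1 using c1 c2 by blast
  qed
  have "card {closed_segment a b, closed_segment c d} \<le> card S'" if "skeleton W S'" "finite S'" for S'
  proof -
    have "\<not> card S' \<le> 1" using no_small_skel that by blast
    moreover have "card {closed_segment a b, closed_segment c d} \<le> 2" by (simp add: card_insert_le_m1)
    ultimately show ?thesis by linarith
  qed
  then show ?thesis unfolding minimum_skeleton_def using sk by auto
qed

end

definition sw :: "pt \<Rightarrow> pt" where "sw z = (snd z, fst z)"
definition ny :: "pt \<Rightarrow> pt" where "ny z = (fst z, - snd z)"

lemma sw_sw[simp]: "sw (sw z) = z" by (simp add: sw_def)
lemma ny_ny[simp]: "ny (ny z) = z" by (simp add: ny_def)
lemma sw_Pair[simp]: "sw (x,y) = (y,x)" by (simp add: sw_def)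
lemma ny_Pair[simp]: "ny (x,y) = (x,-y)" by (simp add: ny_def)

lemma linear_sw: "linear sw"
  by (rule linearI) (auto simp: sw_def)
lemma linear_ny: "linear ny"
  by (rule linearI) (auto simp: ny_def)

lemma inv_inj: "(\<And>x. f (f x) = x) \<Longrightarrow> inj f"
  by (metis injI)

lemma inv_img_img: "(\<And>x. f (f x) = x) \<Longrightarrow> f ` f ` A = A"
  by (simp add: image_image)

lemma inv_mem: "(\<And>x. f (f x) = x) \<Longrightarrow> (f z \<in> f ` A) = (z \<in> A)"
  by (metis image_eqI inv_inj inj_image_mem_iff)

lemma L_sw: "L_paths (sw p) (sw q) = (`) sw ` L_paths p q"
proof -
  obtain px py qx qy where pq: "p = (px,py)" "q = (qx,qy)" by (cases p, cases q)
  have cs: "\<And>u v. closed_segment (sw u) (sw v) = sw ` closed_segment u v"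
    by (rule closed_segment_linear_image[OF linear_sw])
  have "(`) sw ` L_paths p q = {closed_segment (sw (px,py)) (sw (qx,py)) \<union> closed_segment (sw (qx,py)) (sw (qx,qy)),
      closed_segment (sw (px,py)) (sw (px,qy)) \<union> closed_segment (sw (px,qy)) (sw (qx,qy))}"
    unfolding L_paths_def pq image_insert image_empty image_Un cs by simp
  then show ?thesis unfolding L_paths_def pq by (simp add: insert_commute)
qed

lemma L_ny: "L_paths (ny p) (ny q) = (`) ny ` L_paths p q"
proof -
  obtain px py qx qy where pq: "p = (px,py)" "q = (qx,qy)" by (cases p, cases q)
  have cs: "\<And>u v. closed_segment (ny u) (ny v) = ny ` closed_segment u v"
    by (rule closed_segment_linear_image[OF linear_ny])
  have "(`) ny ` L_paths p q = {closed_segment (ny (px,py)) (ny (qx,py)) \<union> closed_segment (ny (qx,py)) (ny (qx,qy)),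
      closed_segment (ny (px,py)) (ny (px,qy)) \<union> closed_segment (ny (px,qy)) (ny (qx,qy))}"
    unfolding L_paths_def pq image_insert image_empty image_Un cs by simp
  then show ?thesis unfolding L_paths_def pq by (simp add: insert_commute)
qed

lemma skel_transport:
  assumes lin: "linear f" and inv: "\<And>x. f (f x) = x"
    and L: "\<And>p q. L_paths (f p) (f q) = (`) f ` L_paths p q"
    and sk: "skeleton (f ` W) S"
  shows "skeleton W ((`) f ` S)"
proof -
  have injf: "inj f" using inv by (rule inv_inj)
  have intf: "interior (f ` W) = f ` interior W" by (rule interior_injective_linear_image[OF lin injf])
  have cs: "\<And>u v. closed_segment (f u) (f v) = f ` closed_segment u v"
    by (rule closed_segment_linear_image[OF lin])
  have seg: "\<forall>s\<in>(`) f ` S. is_segment s"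
  proof
    fix s' assume "s' \<in> (`) f ` S"
    then obtain s where s: "s \<in> S" "s' = f ` s" by blast
    have "is_segment s" using sk s(1) unfolding skeleton_def by blast
    then obtain u v where uv: "u \<noteq> v" "s = closed_segment u v" unfolding is_segment_def by blast
    have "f u \<noteq> f v" using uv(1) injf by (meson injD)
    moreover have "s' = closed_segment (f u) (f v)" using cs s uv by simp
    ultimately show "is_segment s'" unfolding is_segment_def by blast
  qed
  have sub: "\<Union> ((`) f ` S) \<subseteq> W"
  proof
    fix z assume "z \<in> \<Union> ((`) f ` S)"
    then obtain s where s: "s \<in> S" "z \<in> f ` s" by blast
    have "s \<subseteq> f ` W" using sk s(1) unfolding skeleton_def by blast
    then have "f ` s \<subseteq> f ` f ` W" by (rule image_mono)
    then have "f ` s \<subseteq> W" using inv_img_img[of f W, OF inv] by simp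
    then show "z \<in> W" using s(2) by blast
  qed
  have cov: "\<forall>P\<in>L_paths p q. \<exists>s\<in>(`) f ` S. P \<inter> s \<noteq> {}"
    if h: "p \<notin> interior W" "q \<notin> interior W" "\<forall>P\<in>L_paths p q. P \<inter> interior W \<noteq> {}" for p q
  proof -
    have fp: "f p \<notin> interior (f ` W)" "f q \<notin> interior (f ` W)"
      unfolding intf using h(1,2) inv_mem[of f p "interior W", OF inv] inv_mem[of f q "interior W", OF inv] by blast+
    have "\<forall>P'\<in>L_paths (f p) (f q). P' \<inter> interior (f ` W) \<noteq> {}"
    proof
      fix P' assume "P' \<in> L_paths (f p) (f q)"
      then obtain P where P: "P \<in> L_paths p q" "P' = f ` P" unfolding L by blast
      then obtain z where "z \<in> P" "z \<in> interior W" using h(3) by blast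
      then have "f z \<in> P' \<inter> interior (f ` W)" unfolding intf P(2) by blast
      then show "P' \<inter> interior (f ` W) \<noteq> {}" by blast
    qed
    moreover have "\<And>p q. p \<notin> interior (f ` W) \<and> q \<notin> interior (f ` W) \<and> (\<forall>P\<in>L_paths p q. P \<inter> interior (f ` W) \<noteq> {}) \<longrightarrow>
            (\<forall>P\<in>L_paths p q. \<exists>s\<in>S. P \<inter> s \<noteq> {})" using sk unfolding skeleton_def by blast
    ultimately have c: "\<forall>P'\<in>L_paths (f p) (f q). \<exists>s\<in>S. P' \<inter> s \<noteq> {}"
      using fp by blast
    show ?thesis
    proof
      fix P assume P: "P \<in> L_paths p q"
      then have "f ` P \<in> L_paths (f p) (f q)" unfolding L by blast
      then obtain s where s: "s \<in> S" "f ` P \<inter> s \<noteq> {}" using c by blast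
      then obtain w where w: "w \<in> P" "f w \<in> s" by blast
      then have "f (f w) \<in> f ` s" by blast
      then have "w \<in> f ` s" using inv by simp
      then show "\<exists>s\<in>(`) f ` S. P \<inter> s \<noteq> {}" using s(1) w(1) by blast
    qed
  qed
  show ?thesis unfolding skeleton_def
  proof (intro conjI allI impI)
    show "\<forall>s\<in>(`) f ` S. is_segment s" by (rule seg)
    show "\<Union> ((`) f ` S) \<subseteq> W" by (rule sub)
    fix p q assume h: "p \<notin> interior W \<and> q \<notin> interior W \<and> (\<forall>P\<in>L_paths p q. P \<inter> interior W \<noteq> {})"
    show "\<forall>P\<in>L_paths p q. \<exists>s\<in>(`) f ` S. P \<inter> s \<noteq> {}"
      by (rule cov) (use h in auto)
  qed
qed

lemma min_transport:
  assumes lin: "linear f" and inv: "\<And>x. f (f x) = x"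
    and L: "\<And>p q. L_paths (f p) (f q) = (`) f ` L_paths p q"
    and ms: "minimum_skeleton (f ` W) S"
  shows "minimum_skeleton W ((`) f ` S)"
proof -
  have injf: "inj f" using inv by (rule inv_inj)
  have inj2: "inj ((`) f)" by (rule injI) (metis inv_img_img[of f, OF inv])
  have sk: "skeleton W ((`) f ` S)" using skel_transport[OF lin inv L] ms unfolding minimum_skeleton_def by blast
  have fin: "finite S" using ms unfolding minimum_skeleton_def by blast
  have cardS: "card ((`) f ` S) = card S" using inj2 by (rule card_image[OF inj_on_subset]) simp
  have "card ((`) f ` S) \<le> card S'" if "skeleton W S'" "finite S'" for S'
  proof -
    have "skeleton (f ` W) ((`) f ` S')"
      using skel_transport[OF lin inv L, of "f ` W" S'] that(1) inv_img_img[of f W, OF inv] by simp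
    then have "card S \<le> card ((`) f ` S')" using ms that(2) unfolding minimum_skeleton_def by blast
    also have "\<dots> \<le> card S'" using that(2) by (rule card_image_le)
    finally show ?thesis using cardS by simp
  qed
  then show ?thesis unfolding minimum_skeleton_def using sk fin by blast
qed

definition hside :: "pt set \<Rightarrow> real \<Rightarrow> bool" where
  "hside W y \<longleftrightarrow> (\<exists>l r. l < r \<and> (\<forall>x. l \<le> x \<longrightarrow> x \<le> r \<longrightarrow> (x,y) \<in> W) \<and> (\<forall>z\<in>W. snd z = y \<longrightarrow> l \<le> fst z \<and> fst z \<le> r))"
definition vside :: "pt set \<Rightarrow> real \<Rightarrow> bool" where
  "vside W x \<longleftrightarrow> (\<exists>l r. l < r \<and> (\<forall>y. l \<le> y \<longrightarrow> y \<le> r \<longrightarrow> (x,y) \<in> W) \<and> (\<forall>z\<in>W. fst z = x \<longrightarrow> l \<le> snd z \<and> snd z \<le> r))"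

definition raw :: "pt set \<Rightarrow> real \<Rightarrow> real \<Rightarrow> real \<Rightarrow> real \<Rightarrow> pt \<Rightarrow> pt \<Rightarrow> pt \<Rightarrow> pt \<Rightarrow> bool" where
  "raw W x0 x1 y0 y1 a b c d \<longleftrightarrow> x0 < x1 \<and> y0 < y1 \<and>
     (\<forall>z\<in>W. x0 \<le> fst z \<and> fst z \<le> x1 \<and> y0 \<le> snd z \<and> snd z \<le> y1) \<and> HC W \<and> VC W \<and>
     hside W y0 \<and> hside W y1 \<and> vside W x0 \<and> vside W x1 \<and>
     snd a = y0 \<and> snd b = y1 \<and> closed_segment a b \<subseteq> W \<and>
     fst c = x0 \<and> fst d = x1 \<and> closed_segment c d \<subseteq> W"

lemma rawD: assumes "raw W x0 x1 y0 y1 a b c d"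
  shows "x0 < x1" "y0 < y1" "\<And>z. z \<in> W \<Longrightarrow> x0 \<le> fst z \<and> fst z \<le> x1 \<and> y0 \<le> snd z \<and> snd z \<le> y1"
    "HC W" "VC W" "hside W y0" "hside W y1" "vside W x0" "vside W x1"
    "snd a = y0" "snd b = y1" "closed_segment a b \<subseteq> W" "fst c = x0" "fst d = x1" "closed_segment c d \<subseteq> W"
  using assms unfolding raw_def by simp_all

lemma hsideE: assumes "hside W y"
  obtains l r where "l < r" "\<And>x. l \<le> x \<Longrightarrow> x \<le> r \<Longrightarrow> (x,y) \<in> W"
      "\<And>z. z \<in> W \<Longrightarrow> snd z = y \<Longrightarrow> l \<le> fst z \<and> fst z \<le> r"
  using assms unfolding hside_def by blast

lemma vsideE: assumes "vside W x"
  obtains l r where "l < r" "\<And>y. l \<le> y \<Longrightarrow> y \<le> r \<Longrightarrow> (x,y) \<in> W"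
      "\<And>z. z \<in> W \<Longrightarrow> fst z = x \<Longrightarrow> l \<le> snd z \<and> snd z \<le> r"
  using assms unfolding vside_def by blast

lemma raw_bot:
  assumes r: "raw W x0 x1 y0 y1 a b c d"
    and k: "(x0,y0) \<in> W" "(x1,y0) \<in> W" "(x0,y1) \<notin> W" "(x1,y1) \<notin> W"
  shows "minimum_skeleton W {closed_segment a b, closed_segment c d}"
proof -
  note R = rawD[OF r]
  note box = R(3)
  obtain lb rb where B: "lb < rb" "\<And>x. lb \<le> x \<Longrightarrow> x \<le> rb \<Longrightarrow> (x,y0) \<in> W"
      "\<And>z. z \<in> W \<Longrightarrow> snd z = y0 \<Longrightarrow> lb \<le> fst z \<and> fst z \<le> rb"
    using hsideE[OF R(6)] by metis
  obtain tl tr where T: "tl < tr" "\<And>x. tl \<le> x \<Longrightarrow> x \<le> tr \<Longrightarrow> (x,y1) \<in> W"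
      "\<And>z. z \<in> W \<Longrightarrow> snd z = y1 \<Longrightarrow> tl \<le> fst z \<and> fst z \<le> tr"
    using hsideE[OF R(7)] by metis
  obtain ll lr where L: "ll < lr" "\<And>y. ll \<le> y \<Longrightarrow> y \<le> lr \<Longrightarrow> (x0,y) \<in> W"
      "\<And>z. z \<in> W \<Longrightarrow> fst z = x0 \<Longrightarrow> ll \<le> snd z \<and> snd z \<le> lr"
    using vsideE[OF R(8)] by metis
  obtain rl rr where RR: "rl < rr" "\<And>y. rl \<le> y \<Longrightarrow> y \<le> rr \<Longrightarrow> (x1,y) \<in> W"
      "\<And>z. z \<in> W \<Longrightarrow> fst z = x1 \<Longrightarrow> rl \<le> snd z \<and> snd z \<le> rr"
    using vsideE[OF R(9)] by metis
  have lb: "lb \<le> x0" "x1 \<le> rb" using B(3)[OF k(1)] B(3)[OF k(2)] by auto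
  have tlx: "x0 \<le> tl" "tr \<le> x1" using box[OF T(2)[of tl]] box[OF T(2)[of tr]] T(1) by auto
  have tl0: "tl \<noteq> x0" using T(2)[of tl] T(1) k(3) by auto
  have tr1: "tr \<noteq> x1" using T(2)[of tr] T(1) k(4) by auto
  have ll: "ll \<le> y0" "y0 \<le> ll" using L(3)[OF k(1)] box[OF L(2)[of ll]] L(1) by auto
  have lr: "lr \<le> y1" "lr \<noteq> y1" using box[OF L(2)[of lr]] L(1) L(2)[of lr] k(3) by auto
  have rl: "rl \<le> y0" "y0 \<le> rl" using RR(3)[OF k(2)] box[OF RR(2)[of rl]] RR(1) by auto
  have rr: "rr \<le> y1" "rr \<noteq> y1" using box[OF RR(2)[of rr]] RR(1) RR(2)[of rr] k(4) by auto
  interpret bot W x0 x1 y0 y1 tl tr lr rr a b c d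
  proof
    show "x0 < x1" "y0 < y1" using R(1,2) .
    show "\<And>z. z \<in> W \<Longrightarrow> x0 \<le> fst z \<and> fst z \<le> x1 \<and> y0 \<le> snd z \<and> snd z \<le> y1" by (rule box)
    show "HC W" "VC W" using R(4,5) .
    show "\<And>x. x0 \<le> x \<Longrightarrow> x \<le> x1 \<Longrightarrow> (x, y0) \<in> W" using B(2) lb by auto
    show "x0 < tl" "tl < tr" "tr < x1" using tlx tl0 tr1 T(1) by auto
    show "\<And>x. tl \<le> x \<Longrightarrow> x \<le> tr \<Longrightarrow> (x, y1) \<in> W" by (rule T(2))
    show "\<And>z. z \<in> W \<Longrightarrow> snd z = y1 \<Longrightarrow> tl \<le> fst z \<and> fst z \<le> tr" by (rule T(3))
    show "y0 < lr" "lr < y1" using ll lr L(1) by auto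
    show "\<And>y. y0 \<le> y \<Longrightarrow> y \<le> lr \<Longrightarrow> (x0, y) \<in> W" using L(2) ll by auto
    show "\<And>z. z \<in> W \<Longrightarrow> fst z = x0 \<Longrightarrow> snd z \<le> lr" using L(3) by blast
    show "y0 < rr" "rr < y1" using rl rr RR(1) by auto
    show "\<And>y. y0 \<le> y \<Longrightarrow> y \<le> rr \<Longrightarrow> (x1, y) \<in> W" using RR(2) rl by auto
    show "\<And>z. z \<in> W \<Longrightarrow> fst z = x1 \<Longrightarrow> snd z \<le> rr" using RR(3) by blast
    show "snd a = y0" "snd b = y1" "closed_segment a b \<subseteq> W" using R(10-12) .
    show "fst c = x0" "fst d = x1" "closed_segment c d \<subseteq> W" using R(13-15) .
  qed
  show ?thesis by (rule main)
qed

lemma ny_mem: "((x,y) \<in> ny ` W) = ((x,-y) \<in> W)"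
  using inv_mem[of ny "(x,-y)" W] by simp
lemma sw_mem: "((x,y) \<in> sw ` W) = ((y,x) \<in> W)"
  using inv_mem[of sw "(y,x)" W] by simp

lemma rawI: assumes "x0 < x1" "y0 < y1" "\<And>z. z \<in> W \<Longrightarrow> x0 \<le> fst z \<and> fst z \<le> x1 \<and> y0 \<le> snd z \<and> snd z \<le> y1"
    "HC W" "VC W" "hside W y0" "hside W y1" "vside W x0" "vside W x1"
    "snd a = y0" "snd b = y1" "closed_segment a b \<subseteq> W" "fst c = x0" "fst d = x1" "closed_segment c d \<subseteq> W"
  shows "raw W x0 x1 y0 y1 a b c d"
  unfolding raw_def using assms by blast

lemma img_box: assumes "\<And>w. w \<in> W \<Longrightarrow> P (f w)" "z \<in> f ` W" shows "P z"
  using assms by blast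

lemma raw_ny: assumes r: "raw W x0 x1 y0 y1 a b c d"
  shows "raw (ny ` W) x0 x1 (-y1) (-y0) (ny b) (ny a) (ny c) (ny d)"
proof (rule rawI)
  note R = rawD[OF r]
  show "x0 < x1" "- y1 < - y0" using R(1,2) by simp_all
  show "x0 \<le> fst z \<and> fst z \<le> x1 \<and> - y1 \<le> snd z \<and> snd z \<le> - y0" if "z \<in> ny ` W" for z
  proof (rule img_box[OF _ that])
    fix w assume "w \<in> W" then show "x0 \<le> fst (ny w) \<and> fst (ny w) \<le> x1 \<and> - y1 \<le> snd (ny w) \<and> snd (ny w) \<le> - y0"
      using R(3)[of w] by (simp add: ny_def)
  qed
  show "HC (ny ` W)" unfolding HC_def ny_mem using R(4) unfolding HC_def by blast
  show "VC (ny ` W)" unfolding VC_def ny_mem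
  proof (intro allI impI)
    fix p q x y assume h: "(x, - p) \<in> W" "(x, - q) \<in> W" "p \<le> y" "y \<le> q"
    have "-q \<le> -y" "-y \<le> -p" using h by simp_all
    then show "(x, - y) \<in> W" using R(5) h(1,2) unfolding VC_def by blast
  qed
  have hs: "hside (ny ` W) (-y)" if hy: "hside W y" for y
  proof -
    obtain l r where lr: "l < r" "\<And>x. l \<le> x \<Longrightarrow> x \<le> r \<Longrightarrow> (x,y) \<in> W"
      "\<And>z. z \<in> W \<Longrightarrow> snd z = y \<Longrightarrow> l \<le> fst z \<and> fst z \<le> r"
      using hsideE[OF hy] by metis
    have A: "\<forall>x. l \<le> x \<longrightarrow> x \<le> r \<longrightarrow> (x, - y) \<in> ny ` W" unfolding ny_mem using lr(2) by simp
    have B: "\<forall>z\<in>ny ` W. snd z = - y \<longrightarrow> l \<le> fst z \<and> fst z \<le> r"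
    proof (intro ballI impI)
      fix z assume z: "z \<in> ny ` W" "snd z = - y"
      then obtain w where w: "w \<in> W" "z = ny w" by blast
      then have "snd w = y" using z(2) by (simp add: ny_def)
      then show "l \<le> fst z \<and> fst z \<le> r" using lr(3)[OF w(1)] w(2) by (simp add: ny_def)
    qed
    show ?thesis unfolding hside_def using lr(1) A B by blast
  qed
  show "hside (ny ` W) (- y1)" using hs[OF R(7)] .
  show "hside (ny ` W) (- y0)" using hs[OF R(6)] .
  have vs: "vside (ny ` W) x" if hx: "vside W x" for x
  proof -
    obtain l r where lr: "l < r" "\<And>y. l \<le> y \<Longrightarrow> y \<le> r \<Longrightarrow> (x,y) \<in> W"
      "\<And>z. z \<in> W \<Longrightarrow> fst z = x \<Longrightarrow> l \<le> snd z \<and> snd z \<le> r"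
      using vsideE[OF hx] by metis
    have A: "\<forall>y. -r \<le> y \<longrightarrow> y \<le> -l \<longrightarrow> (x, y) \<in> ny ` W"
    proof (intro allI impI)
      fix y assume "- r \<le> y" "y \<le> - l" then show "(x, y) \<in> ny ` W" unfolding ny_mem[of x y] using lr(2)[of "-y"] by simp
    qed
    have B: "\<forall>z\<in>ny ` W. fst z = x \<longrightarrow> -r \<le> snd z \<and> snd z \<le> -l"
    proof (intro ballI impI)
      fix z assume z: "z \<in> ny ` W" "fst z = x"
      then obtain w where w: "w \<in> W" "z = ny w" by blast
      then have "fst w = x" using z(2) by (simp add: ny_def)
      then show "- r \<le> snd z \<and> snd z \<le> - l" using lr(3)[OF w(1)] w(2) by (simp add: ny_def)
    qed
    have "-r < -l" using lr(1) by simp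
    then show ?thesis unfolding vside_def using A B by blast
  qed
  show "vside (ny ` W) x0" "vside (ny ` W) x1" using vs[OF R(8)] vs[OF R(9)] .
  show "snd (ny b) = - y1" "snd (ny a) = - y0" "fst (ny c) = x0" "fst (ny d) = x1"
    using R(10,11,13,14) by (simp_all add: ny_def)
  have "closed_segment (ny b) (ny a) = ny ` closed_segment a b"
    using closed_segment_linear_image[OF linear_ny, of b a] closed_segment_commute by metis
  then show "closed_segment (ny b) (ny a) \<subseteq> ny ` W" using R(12) by auto
  have "closed_segment (ny c) (ny d) = ny ` closed_segment c d"
    using closed_segment_linear_image[OF linear_ny, of c d] by metis
  then show "closed_segment (ny c) (ny d) \<subseteq> ny ` W" using R(15) by auto
qed

lemma raw_sw: assumes r: "raw W x0 x1 y0 y1 a b c d"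
  shows "raw (sw ` W) y0 y1 x0 x1 (sw c) (sw d) (sw a) (sw b)"
proof (rule rawI)
  note R = rawD[OF r]
  show "y0 < y1" "x0 < x1" using R(1,2) by simp_all
  show "y0 \<le> fst z \<and> fst z \<le> y1 \<and> x0 \<le> snd z \<and> snd z \<le> x1" if "z \<in> sw ` W" for z
  proof (rule img_box[OF _ that])
    fix w assume "w \<in> W" then show "y0 \<le> fst (sw w) \<and> fst (sw w) \<le> y1 \<and> x0 \<le> snd (sw w) \<and> snd (sw w) \<le> x1"
      using R(3)[of w] by (simp add: sw_def)
  qed
  show "HC (sw ` W)" unfolding HC_def sw_mem using R(5) unfolding VC_def by blast
  show "VC (sw ` W)" unfolding VC_def sw_mem using R(4) unfolding HC_def by blast
  have hs: "hside (sw ` W) x" if hx: "vside W x" for x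
  proof -
    obtain l r where lr: "l < r" "\<And>y. l \<le> y \<Longrightarrow> y \<le> r \<Longrightarrow> (x,y) \<in> W"
      "\<And>z. z \<in> W \<Longrightarrow> fst z = x \<Longrightarrow> l \<le> snd z \<and> snd z \<le> r"
      using vsideE[OF hx] by metis
    have A: "\<forall>y. l \<le> y \<longrightarrow> y \<le> r \<longrightarrow> (y, x) \<in> sw ` W" unfolding sw_mem using lr(2) by simp
    have B: "\<forall>z\<in>sw ` W. snd z = x \<longrightarrow> l \<le> fst z \<and> fst z \<le> r"
    proof (intro ballI impI)
      fix z assume z: "z \<in> sw ` W" "snd z = x"
      then obtain w where w: "w \<in> W" "z = sw w" by blast
      then have "fst w = x" using z(2) by (simp add: sw_def)
      then show "l \<le> fst z \<and> fst z \<le> r" using lr(3)[OF w(1)] w(2) by (simp add: sw_def)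
    qed
    show ?thesis unfolding hside_def using lr(1) A B by blast
  qed
  have vs: "vside (sw ` W) y" if hy: "hside W y" for y
  proof -
    obtain l r where lr: "l < r" "\<And>x. l \<le> x \<Longrightarrow> x \<le> r \<Longrightarrow> (x,y) \<in> W"
      "\<And>z. z \<in> W \<Longrightarrow> snd z = y \<Longrightarrow> l \<le> fst z \<and> fst z \<le> r"
      using hsideE[OF hy] by metis
    have A: "\<forall>x. l \<le> x \<longrightarrow> x \<le> r \<longrightarrow> (y, x) \<in> sw ` W" unfolding sw_mem using lr(2) by simp
    have B: "\<forall>z\<in>sw ` W. fst z = y \<longrightarrow> l \<le> snd z \<and> snd z \<le> r"
    proof (intro ballI impI)
      fix z assume z: "z \<in> sw ` W" "fst z = y"
      then obtain w where w: "w \<in> W" "z = sw w" by blast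
      then have "snd w = y" using z(2) by (simp add: sw_def)
      then show "l \<le> snd z \<and> snd z \<le> r" using lr(3)[OF w(1)] w(2) by (simp add: sw_def)
    qed
    show ?thesis unfolding vside_def using lr(1) A B by blast
  qed
  show "hside (sw ` W) x0" "hside (sw ` W) x1" using hs[OF R(8)] hs[OF R(9)] .
  show "vside (sw ` W) y0" "vside (sw ` W) y1" using vs[OF R(6)] vs[OF R(7)] .
  show "snd (sw c) = x0" "snd (sw d) = x1" "fst (sw a) = y0" "fst (sw b) = y1"
    using R(10,11,13,14) by (simp_all add: sw_def)
  have "closed_segment (sw c) (sw d) = sw ` closed_segment c d"
    using closed_segment_linear_image[OF linear_sw, of c d] by metis
  then show "closed_segment (sw c) (sw d) \<subseteq> sw ` W" using R(15) by auto
  have "closed_segment (sw a) (sw b) = sw ` closed_segment a b"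
    using closed_segment_linear_image[OF linear_sw, of a b] by metis
  then show "closed_segment (sw a) (sw b) \<subseteq> sw ` W" using R(12) by auto
qed

lemma raw_top:
  assumes r: "raw W x0 x1 y0 y1 a b c d"
    and k: "(x0,y1) \<in> W" "(x1,y1) \<in> W" "(x0,y0) \<notin> W" "(x1,y0) \<notin> W"
  shows "minimum_skeleton W {closed_segment a b, closed_segment c d}"
proof -
  have "minimum_skeleton (ny ` W) {closed_segment (ny b) (ny a), closed_segment (ny c) (ny d)}"
    by (rule raw_bot[OF raw_ny[OF r]]) (use k in \<open>simp_all add: ny_mem\<close>)
  then have "minimum_skeleton W ((`) ny ` {closed_segment (ny b) (ny a), closed_segment (ny c) (ny d)})"
    by (rule min_transport[OF linear_ny ny_ny L_ny])
  moreover have "(`) ny ` {closed_segment (ny b) (ny a), closed_segment (ny c) (ny d)} = {closed_segment a b, closed_segment c d}"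
  proof -
    have "ny ` closed_segment (ny b) (ny a) = closed_segment a b"
      using closed_segment_linear_image[OF linear_ny, of "ny b" "ny a"] closed_segment_commute[of b a] by simp
    moreover have "ny ` closed_segment (ny c) (ny d) = closed_segment c d"
      using closed_segment_linear_image[OF linear_ny, of "ny c" "ny d"] by simp
    ultimately show ?thesis by simp
  qed
  ultimately show ?thesis by simp
qed

lemma raw_left:
  assumes r: "raw W x0 x1 y0 y1 a b c d"
    and k: "(x0,y0) \<in> W" "(x0,y1) \<in> W" "(x1,y0) \<notin> W" "(x1,y1) \<notin> W"
  shows "minimum_skeleton W {closed_segment a b, closed_segment c d}"
proof -
  have "minimum_skeleton (sw ` W) {closed_segment (sw c) (sw d), closed_segment (sw a) (sw b)}"
    by (rule raw_bot[OF raw_sw[OF r]]) (use k in \<open>simp_all add: sw_mem\<close>)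
  then have "minimum_skeleton W ((`) sw ` {closed_segment (sw c) (sw d), closed_segment (sw a) (sw b)})"
    by (rule min_transport[OF linear_sw sw_sw L_sw])
  moreover have "(`) sw ` {closed_segment (sw c) (sw d), closed_segment (sw a) (sw b)} = {closed_segment a b, closed_segment c d}"
  proof -
    have "sw ` closed_segment (sw c) (sw d) = closed_segment c d"
      using closed_segment_linear_image[OF linear_sw, of "sw c" "sw d"] by simp
    moreover have "sw ` closed_segment (sw a) (sw b) = closed_segment a b"
      using closed_segment_linear_image[OF linear_sw, of "sw a" "sw b"] by simp
    ultimately show ?thesis by (simp add: insert_commute)
  qed
  ultimately show ?thesis by simp
qed

lemma raw_right:
  assumes r: "raw W x0 x1 y0 y1 a b c d"
    and k: "(x1,y0) \<in> W" "(x1,y1) \<in> W" "(x0,y0) \<notin> W" "(x0,y1) \<notin> W"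
  shows "minimum_skeleton W {closed_segment a b, closed_segment c d}"
proof -
  have "minimum_skeleton (sw ` W) {closed_segment (sw c) (sw d), closed_segment (sw a) (sw b)}"
    by (rule raw_top[OF raw_sw[OF r]]) (use k in \<open>simp_all add: sw_mem\<close>)
  then have "minimum_skeleton W ((`) sw ` {closed_segment (sw c) (sw d), closed_segment (sw a) (sw b)})"
    by (rule min_transport[OF linear_sw sw_sw L_sw])
  moreover have "(`) sw ` {closed_segment (sw c) (sw d), closed_segment (sw a) (sw b)} = {closed_segment a b, closed_segment c d}"
  proof -
    have "sw ` closed_segment (sw c) (sw d) = closed_segment c d"
      using closed_segment_linear_image[OF linear_sw, of "sw c" "sw d"] by simp
    moreover have "sw ` closed_segment (sw a) (sw b) = closed_segment a b"
      using closed_segment_linear_image[OF linear_sw, of "sw a" "sw b"] by simp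
    ultimately show ?thesis by (simp add: insert_commute)
  qed
  ultimately show ?thesis by simp
qed

lemma path_len_single[simp]: "path_len [a] = 0"
  unfolding path_len_def by simp

lemma path_len_cons2: "path_len (a # b # xs) = l1 a b + path_len (b # xs)"
proof -
  have s1: "{i. Suc i < length (a # b # xs)} = {..<Suc (length xs)}" by auto
  have s2: "{i. Suc i < length (b # xs)} = {..<length xs}" by auto
  have "path_len (a # b # xs) = (\<Sum>i<Suc (length xs). l1 ((a#b#xs) ! i) ((a#b#xs) ! Suc i))"
    unfolding path_len_def s1 by simp
  also have "\<dots> = l1 a b + (\<Sum>i<length xs. l1 ((a#b#xs) ! Suc i) ((a#b#xs) ! Suc (Suc i)))"
    by (subst sum.lessThan_Suc_shift) simp
  also have "\<dots> = l1 a b + path_len (b # xs)"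
    unfolding path_len_def s2 by simp
  finally show ?thesis .
qed

lemma path_set_single[simp]: "path_set [a] = {a}"
  unfolding path_set_def by simp

lemma path_set_cons2: "path_set (a # b # xs) = closed_segment a b \<union> path_set (b # xs)"
proof -
  have s1: "{i. Suc i < length (a # b # xs)} = {..<Suc (length xs)}" by auto
  have s2: "{i. Suc i < length (b # xs)} = {..<length xs}" by auto
  have "(\<Union>i\<in>{..<Suc (length xs)}. closed_segment ((a#b#xs) ! i) ((a#b#xs) ! Suc i))
      = closed_segment a b \<union> (\<Union>i\<in>{..<length xs}. closed_segment ((a#b#xs) ! Suc i) ((a#b#xs) ! Suc (Suc i)))"
    unfolding lessThan_Suc_eq_insert_0 by simp
  also have "\<dots> = closed_segment a b \<union> (\<Union>i\<in>{..<length xs}. closed_segment ((b#xs) ! i) ((b#xs) ! Suc i))"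
    by simp
  finally have U: "(\<Union>i\<in>{i. Suc i < length (a # b # xs)}. closed_segment ((a#b#xs) ! i) ((a#b#xs) ! Suc i))
      = closed_segment a b \<union> (\<Union>i\<in>{i. Suc i < length (b # xs)}. closed_segment ((b#xs) ! i) ((b#xs) ! Suc i))"
    unfolding s1 s2 .
  have "a \<in> closed_segment a b" by simp
  then show ?thesis unfolding path_set_def U by auto
qed

lemma l1_tri: "l1 a c \<le> l1 a b + l1 b c"
  unfolding l1_def by linarith

lemma l1_self[simp]: "l1 a a = 0" unfolding l1_def by simp

lemma path_len_tri: "ps \<noteq> [] \<Longrightarrow> z \<in> set ps \<Longrightarrow> l1 (hd ps) z + l1 z (last ps) \<le> path_len ps"
proof (induction ps arbitrary: z rule: induct_list012)
  case 1 then show ?case by simp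
next
  case (2 x) then show ?case by simp
next
  case (3 a b xs)
  have IH: "l1 b w + l1 w (last (b # xs)) \<le> path_len (b # xs)" if "w \<in> set (b # xs)" for w
    using 3(2)[of w] that by simp
  have lst: "last (a # b # xs) = last (b # xs)" by simp
  show ?case
  proof (cases "z = a")
    case True
    have "l1 b (last (b # xs)) \<le> path_len (b # xs)" using IH[of b] by simp
    then show ?thesis using True l1_tri[of a "last (b#xs)" b] by (simp add: path_len_cons2)
  next
    case False
    then have z: "z \<in> set (b # xs)" using 3(4) by simp
    show ?thesis using IH[OF z] l1_tri[of a z b] by (simp add: path_len_cons2)
  qed
qed

lemma seg3_h: "closed_segment ((a1::real), (h::real)) (c1, h) \<subseteq> closed_segment (a1, h) (b1, h) \<union> closed_segment (b1, h) (c1, h)"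
proof
  fix z assume z: "z \<in> closed_segment (a1, h) (c1, h)"
  obtain z1 z2 where zz: "z = (z1,z2)" by (cases z)
  have "z2 = h" "min a1 c1 \<le> z1" "z1 \<le> max a1 c1" using z unfolding zz hseg_mem by auto
  then have "(z2 = h \<and> min a1 b1 \<le> z1 \<and> z1 \<le> max a1 b1) \<or> (z2 = h \<and> min b1 c1 \<le> z1 \<and> z1 \<le> max b1 c1)"
    by (cases "a1 \<le> c1"; cases "a1 \<le> b1"; cases "b1 \<le> c1"; cases "z1 \<le> b1") (auto simp: min_def max_def)
  then show "z \<in> closed_segment (a1, h) (b1, h) \<union> closed_segment (b1, h) (c1, h)"
    unfolding zz Un_iff hseg_mem by blast
qed

lemma seg3_v: "closed_segment ((h::real), (a1::real)) (h, c1) \<subseteq> closed_segment (h, a1) (h, b1) \<union> closed_segment (h, b1) (h, c1)"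
proof
  fix z assume z: "z \<in> closed_segment (h, a1) (h, c1)"
  obtain z1 z2 where zz: "z = (z1,z2)" by (cases z)
  have "z1 = h" "min a1 c1 \<le> z2" "z2 \<le> max a1 c1" using z unfolding zz vseg_mem by auto
  then have "(z1 = h \<and> min a1 b1 \<le> z2 \<and> z2 \<le> max a1 b1) \<or> (z1 = h \<and> min b1 c1 \<le> z2 \<and> z2 \<le> max b1 c1)"
    by (cases "a1 \<le> c1"; cases "a1 \<le> b1"; cases "b1 \<le> c1"; cases "z2 \<le> b1") (auto simp: min_def max_def)
  then show "z \<in> closed_segment (h, a1) (h, b1) \<union> closed_segment (h, b1) (h, c1)"
    unfolding zz Un_iff vseg_mem by blast
qed

lemma cover_hline: "ps \<noteq> [] \<Longrightarrow> (\<forall>z\<in>set ps. snd z = h) \<Longrightarrow> closed_segment (hd ps) (last ps) \<subseteq> path_set ps"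
proof (induction ps rule: induct_list012)
  case 1 then show ?case by simp
next
  case (2 x) then show ?case by simp
next
  case (3 a b xs)
  have IH: "closed_segment b (last (b # xs)) \<subseteq> path_set (b # xs)" using 3 by simp
  obtain a1 where a: "a = (a1, h)" using 3(4) by (metis list.set_intros(1) prod.collapse)
  obtain b1 where b: "b = (b1, h)" using 3(4) by (metis list.set_intros(1,2) prod.collapse)
  obtain c1 where c: "last (b # xs) = (c1, h)" using 3(4) by (metis last_in_set list.distinct(1) list.set_intros(2) prod.collapse)
  define L where "L = last (b # xs)"
  have c': "L = (c1, h)" using c L_def by simp
  have "closed_segment a L \<subseteq> closed_segment a b \<union> closed_segment b L"
    unfolding c' a b by (rule seg3_h)
  then have "closed_segment a (last (b # xs)) \<subseteq> closed_segment a b \<union> closed_segment b (last (b # xs))"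
    unfolding L_def .
  then show ?case using IH by (auto simp: path_set_cons2)
qed

lemma cover_vline: "ps \<noteq> [] \<Longrightarrow> (\<forall>z\<in>set ps. fst z = h) \<Longrightarrow> closed_segment (hd ps) (last ps) \<subseteq> path_set ps"
proof (induction ps rule: induct_list012)
  case 1 then show ?case by simp
next
  case (2 x) then show ?case by simp
next
  case (3 a b xs)
  have IH: "closed_segment b (last (b # xs)) \<subseteq> path_set (b # xs)" using 3 by simp
  obtain a1 where a: "a = (h, a1)" using 3(4) by (metis list.set_intros(1) prod.collapse)
  obtain b1 where b: "b = (h, b1)" using 3(4) by (metis list.set_intros(1,2) prod.collapse)
  obtain c1 where c: "last (b # xs) = (h, c1)" using 3(4) by (metis last_in_set list.distinct(1) list.set_intros(2) prod.collapse)
  define L where "L = last (b # xs)"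
  have c': "L = (h, c1)" using c L_def by simp
  have "closed_segment a L \<subseteq> closed_segment a b \<union> closed_segment b L"
    unfolding c' a b by (rule seg3_v)
  then have "closed_segment a (last (b # xs)) \<subseteq> closed_segment a b \<union> closed_segment b (last (b # xs))"
    unfolding L_def .
  then show ?case using IH by (auto simp: path_set_cons2)
qed

lemma shortest_h:
  assumes sp: "shortest_rect_path p q ps" and h: "snd p = snd q"
  shows "closed_segment p q \<subseteq> path_set ps"
proof -
  have rb: "rect_path ps" "hd ps = p" "last ps = q" "ps \<noteq> []"
    using sp unfolding shortest_rect_path_def rect_path_between_def rect_path_def by auto
  have "rect_path_between p q [p, q]" unfolding rect_path_between_def rect_path_def using h
    by (auto simp: less_Suc_eq)
  then have le: "path_len ps \<le> path_len [p,q]" using sp unfolding shortest_rect_path_def by blast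
  have pl: "path_len [p,q] = l1 p q" by (simp add: path_len_cons2)
  have "\<forall>z\<in>set ps. snd z = snd p"
  proof
    fix z assume z: "z \<in> set ps"
    have "l1 p z + l1 z q \<le> l1 p q" using path_len_tri[OF rb(4) z] rb le pl by simp
    then show "snd z = snd p" using h unfolding l1_def by linarith
  qed
  from cover_hline[OF rb(4) this] show ?thesis using rb by simp
qed

lemma shortest_v:
  assumes sp: "shortest_rect_path p q ps" and h: "fst p = fst q"
  shows "closed_segment p q \<subseteq> path_set ps"
proof -
  have rb: "rect_path ps" "hd ps = p" "last ps = q" "ps \<noteq> []"
    using sp unfolding shortest_rect_path_def rect_path_between_def rect_path_def by auto
  have "rect_path_between p q [p, q]" unfolding rect_path_between_def rect_path_def using h
    by (auto simp: less_Suc_eq)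
  then have le: "path_len ps \<le> path_len [p,q]" using sp unfolding shortest_rect_path_def by blast
  have pl: "path_len [p,q] = l1 p q" by (simp add: path_len_cons2)
  have "\<forall>z\<in>set ps. fst z = fst p"
  proof
    fix z assume z: "z \<in> set ps"
    have "l1 p z + l1 z q \<le> l1 p q" using path_len_tri[OF rb(4) z] rb le pl by simp
    then show "fst z = fst p" using h unfolding l1_def by linarith
  qed
  from cover_vline[OF rb(4) this] show ?thesis using rb by simp
qed

lemma rc_HC: assumes "rect_convex W" shows "HC W"
  unfolding HC_def
proof (intro allI impI)
  fix x1 x2 x y assume h: "(x1, y) \<in> W" "(x2, y) \<in> W" "x1 \<le> x" "x \<le> x2"
  obtain ps where ps: "shortest_rect_path (x1,y) (x2,y) ps" "path_set ps \<subseteq> W"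
    using assms h unfolding rect_convex_def by blast
  have "(x,y) \<in> closed_segment (x1,y) (x2,y)" unfolding hseg_mem using h by auto
  then show "(x,y) \<in> W" using shortest_h[OF ps(1)] ps(2) by auto
qed

lemma rc_VC: assumes "rect_convex W" shows "VC W"
  unfolding VC_def
proof (intro allI impI)
  fix y1 y2 x y assume h: "(x, y1) \<in> W" "(x, y2) \<in> W" "y1 \<le> y" "y \<le> y2"
  obtain ps where ps: "shortest_rect_path (x,y1) (x,y2) ps" "path_set ps \<subseteq> W"
    using assms h unfolding rect_convex_def by blast
  have "(x,y) \<in> closed_segment (x,y1) (x,y2)" unfolding vseg_mem using h by auto
  then show "(x,y) \<in> W" using shortest_v[OF ps(1)] ps(2) by auto
qed

definition coord :: "(pt \<Rightarrow> real) \<Rightarrow> (pt \<Rightarrow> real) \<Rightarrow> bool" where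
  "coord c1 c2 \<longleftrightarrow> (c1 = fst \<and> c2 = snd) \<or> (c1 = snd \<and> c2 = fst)"

lemma coord_swap: "coord c1 c2 \<Longrightarrow> coord c2 c1" unfolding coord_def by blast

lemma coord_eq: "coord c1 c2 \<Longrightarrow> (u = w) = (c1 u = c1 w \<and> c2 u = c2 w)"
  unfolding coord_def by (auto simp: prod_eq_iff)

lemma coord_lin: "coord c1 c2 \<Longrightarrow> c1 ((1 - t) *\<^sub>R u + t *\<^sub>R w) = (1 - t) * c1 u + t * c1 w"
  unfolding coord_def by auto

lemma col3: assumes "coord c1 c2" "c1 p = c1 q" "c1 q = c1 r" shows "collinear {p,q,r}"
proof -
  have same: "\<And>x y. x \<in> {p,q,r} \<Longrightarrow> y \<in> {p,q,r} \<Longrightarrow> c1 x = c1 y" using assms(2,3) by auto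
  show ?thesis
  proof (cases "c1 = snd")
    case True
    show ?thesis unfolding collinear_def
    proof (intro exI[of _ "(1::real,0::real)"] ballI)
      fix x y assume "x \<in> {p,q,r}" "y \<in> {p,q,r}"
      then have "snd x = snd y" using same True by metis
      then show "\<exists>c. x - y = c *\<^sub>R (1::real, 0::real)" by (intro exI[of _ "fst x - fst y"]) (simp add: prod_eq_iff)
    qed
  next
    case False
    then have T: "c1 = fst" using assms(1) unfolding coord_def by blast
    show ?thesis unfolding collinear_def
    proof (intro exI[of _ "(0::real,1::real)"] ballI)
      fix x y assume "x \<in> {p,q,r}" "y \<in> {p,q,r}"
      then have "fst x = fst y" using same T by metis
      then show "\<exists>c. x - y = c *\<^sub>R (0::real, 1::real)" by (intro exI[of _ "snd x - snd y"]) (simp add: prod_eq_iff)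
    qed
  qed
qed

lemma idx1: "3 \<le> n \<Longrightarrow> i < n \<Longrightarrow> Suc i mod n \<noteq> i"
  by (cases "Suc i < n") (auto simp: mod_Suc)

lemma idx2: "3 \<le> n \<Longrightarrow> i < n \<Longrightarrow> Suc (Suc i mod n) mod n \<noteq> i"
proof (cases "Suc i < n")
  case True
  assume "3 \<le> n" "i < n"
  then show ?thesis using True by (cases "Suc (Suc i) < n") (auto simp: mod_Suc)
next
  case False
  assume "3 \<le> n" "i < n"
  then have "Suc i = n" using False by simp
  then show ?thesis using \<open>3 \<le> n\<close> by auto
qed

lemma idx_prev: "0 < n \<Longrightarrow> i < n \<Longrightarrow> (i + n - 1) mod n < n \<and> Suc ((i + n - 1) mod n) mod n = i"
proof -
  assume n: "0 < n" "i < n"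
  show ?thesis
  proof (cases i)
    case 0
    then show ?thesis using n by (auto simp: mod_Suc)
  next
    case (Suc k)
    have e: "i + n - 1 = k + n" using Suc by simp
    have "k < n" using Suc n by simp
    then have "(i + n - 1) mod n = k" unfolding e by simp
    then show ?thesis using n Suc by simp
  qed
qed

locale poly =
  fixes vs :: "pt list"
  assumes sp: "simple_polygon vs" and rl: "rectilinear vs"
begin

abbreviation "n \<equiv> length vs"
abbreviation "W \<equiv> region vs"
abbreviation "B \<equiv> polygon_boundary vs"

lemma n3: "3 \<le> n" using sp unfolding simple_polygon_def by blast
lemma dist: "distinct vs" using sp unfolding simple_polygon_def by blast
lemma nc: "a \<in> set vs \<Longrightarrow> b \<in> set vs \<Longrightarrow> c \<in> set vs \<Longrightarrow> a \<noteq> b \<Longrightarrow> a \<noteq> c \<Longrightarrow> b \<noteq> c \<Longrightarrow> \<not> collinear {a,b,c}"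
  using sp unfolding simple_polygon_def by blast
lemma inter: "i < n \<Longrightarrow> j < n \<Longrightarrow> i \<noteq> j \<Longrightarrow> edge_seg vs i \<inter> edge_seg vs j =
          (if Suc i mod n = j then {vs ! j} else if Suc j mod n = i then {vs ! i} else {})"
  using sp unfolding simple_polygon_def by blast

lemma nxt_idx: "nxt vs i = vs ! (Suc i mod n)" by (simp add: nxt_def)
lemma n0: "0 < n" using n3 by linarith
lemma sidx: "i < n \<Longrightarrow> Suc i mod n < n" using n0 by simp

lemma vinj: "i < n \<Longrightarrow> j < n \<Longrightarrow> (vs ! i = vs ! j) = (i = j)"
  using dist by (simp add: nth_eq_iff_index_eq)

lemma edge_ne: "i < n \<Longrightarrow> vs ! i \<noteq> nxt vs i"
  unfolding nxt_idx using vinj[OF _ sidx] idx1[OF n3] by metis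

lemma edge_rect: "i < n \<Longrightarrow> fst (vs ! i) = fst (nxt vs i) \<or> snd (vs ! i) = snd (nxt vs i)"
  using rl unfolding rectilinear_def edges_def by blast

lemma edge_type: "coord c1 c2 \<Longrightarrow> i < n \<Longrightarrow> c1 (vs ! i) = c1 (nxt vs i) \<or> c2 (vs ! i) = c2 (nxt vs i)"
  using edge_rect unfolding coord_def by blast

lemma edge_excl: "coord c1 c2 \<Longrightarrow> i < n \<Longrightarrow> c1 (vs ! i) = c1 (nxt vs i) \<Longrightarrow> c2 (vs ! i) \<noteq> c2 (nxt vs i)"
  using edge_ne coord_eq by blast

lemma vset: "i < n \<Longrightarrow> vs ! i \<in> set vs" by simp
lemma nset: "i < n \<Longrightarrow> nxt vs i \<in> set vs" unfolding nxt_idx using sidx by simp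

lemma consec: assumes c: "coord c1 c2" and i: "i < n"
  and e1: "c1 (vs ! i) = c1 (nxt vs i)" and e2: "c1 (nxt vs i) = c1 (nxt vs (Suc i mod n))"
  shows False
proof -
  have d1: "vs ! i \<noteq> nxt vs i" using edge_ne[OF i] .
  have d2: "nxt vs i \<noteq> nxt vs (Suc i mod n)" using edge_ne[OF sidx[OF i]] unfolding nxt_idx[of i] by simp
  have d3: "vs ! i \<noteq> nxt vs (Suc i mod n)"
    unfolding nxt_idx using vinj[OF i sidx[OF sidx[OF i]]] idx2[OF n3 i] by metis
  have "collinear {vs ! i, nxt vs i, nxt vs (Suc i mod n)}" by (rule col3[OF c e1 e2])
  then show False using nc[OF vset[OF i] nset[OF i] nset[OF sidx[OF i]] d1 d3 d2] by simp
qed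

lemma uniq: assumes c: "coord c1 c2" and i: "i < n" and j: "j < n"
  and ei: "c1 (vs ! i) = h" "c1 (nxt vs i) = h" and ej: "c1 (vs ! j) = h" "c1 (nxt vs j) = h"
  shows "i = j"
proof (rule ccontr)
  assume ij: "i \<noteq> j"
  have d1: "vs ! i \<noteq> vs ! j" using vinj[OF i j] ij by simp
  show False
  proof (cases "nxt vs i = vs ! j")
    case False
    have "collinear {vs ! i, nxt vs i, vs ! j}" by (rule col3[OF c]) (use ei ej in simp_all)
    then show False using nc[OF vset[OF i] nset[OF i] vset[OF j] edge_ne[OF i] d1 False] by simp
  next
    case True
    then have sj: "Suc i mod n = j" unfolding nxt_idx using vinj[OF sidx[OF i] j] by simp
    have d2: "vs ! i \<noteq> nxt vs j"
      unfolding nxt_idx sj[symmetric] using vinj[OF i sidx[OF sidx[OF i]]] idx2[OF n3 i] by metis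
    have "collinear {vs ! i, vs ! j, nxt vs j}" by (rule col3[OF c]) (use ei ej in simp_all)
    then show False using nc[OF vset[OF i] vset[OF j] nset[OF j] d1 d2 edge_ne[OF j]] by simp
  qed
qed

lemma B_edges: "B = (\<Union>i<n. edge_seg vs i)" unfolding polygon_boundary_def ..

lemma edge_B: "i < n \<Longrightarrow> edge_seg vs i \<subseteq> B" unfolding B_edges by blast

lemma B_W: "B \<subseteq> W" unfolding region_def by blast

lemma edge_W: "i < n \<Longrightarrow> edge_seg vs i \<subseteq> W" using edge_B B_W by blast

lemma vW: "i < n \<Longrightarrow> vs ! i \<in> W" using edge_W[of i] unfolding edge_seg_def by auto
lemma nW: "i < n \<Longrightarrow> nxt vs i \<in> W" using edge_W[of i] unfolding edge_seg_def by auto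

lemma compact_B: "compact B"
  unfolding B_edges edge_seg_def by (intro compact_UN) auto

lemma compact_W: "compact W"
proof -
  have cB: "closed B" using compact_B compact_imp_closed by blast
  have bI: "bounded (inside B)" using bounded_inside compact_B compact_imp_bounded by blast
  have "closure (inside B) \<subseteq> B \<union> inside B" by (rule closure_inside_subset[OF cB])
  then have "closure W \<subseteq> W" unfolding region_def closure_Un using cB closure_closed by auto
  then have "closed W" by (simp only: closure_subset_eq)
  moreover have "bounded W" unfolding region_def bounded_Un using bI compact_imp_bounded[OF compact_B] by simp
  ultimately show ?thesis by (simp add: compact_eq_bounded_closed)
qed

lemma inside_int: "inside B \<subseteq> interior W"
  using interior_maximal[of "inside B" W] open_inside[OF compact_imp_closed[OF compact_B]]
  unfolding region_def by blast

lemma W_ne: "W \<noteq> {}" using vW[OF n0] by blast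

end

lemma int_lower: assumes z: "(z::pt) \<in> interior W" and c: "coord c1 c2" and s: "s = 1 \<or> s = -1"
  shows "\<exists>z'\<in>W. s * c1 z' < s * c1 z"
proof -
  obtain e where e: "e > 0" "\<And>x y. \<bar>x - fst z\<bar> < e \<Longrightarrow> \<bar>y - snd z\<bar> < e \<Longrightarrow> (x,y) \<in> W"
    using z int_sq[of z W] by blast
  have ss: "s * s = 1" using s by auto
  show ?thesis
  proof (cases "c1 = fst")
    case True
    have "(fst z - s * e / 2, snd z) \<in> W" using e s by (intro e(2)) auto
    moreover have "s * (fst z - s * e / 2) < s * fst z" using e(1) ss by (simp add: algebra_simps)
    ultimately show ?thesis using True by (intro bexI[of _ "(fst z - s * e / 2, snd z)"]) auto
  next
    case False
    then have T: "c1 = snd" using c unfolding coord_def by blast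
    have "(fst z, snd z - s * e / 2) \<in> W" using e s by (intro e(2)) auto
    moreover have "s * (snd z - s * e / 2) < s * snd z" using e(1) ss by (simp add: algebra_simps)
    ultimately show ?thesis using T by (intro bexI[of _ "(fst z, snd z - s * e / 2)"]) auto
  qed
qed

context poly begin

lemma side_edge:
  assumes c: "coord c1 c2" and s: "s = 1 \<or> s = -1" and z0: "z0 \<in> W" and mn: "\<And>z. z \<in> W \<Longrightarrow> s * c1 z0 \<le> s * c1 z"
    and z: "z \<in> W" "c1 z = c1 z0"
  shows "\<exists>j<n. c1 (vs ! j) = c1 z0 \<and> c1 (nxt vs j) = c1 z0 \<and> z \<in> edge_seg vs j"
proof -
  have zB: "z \<in> B"
  proof (rule ccontr)
    assume "z \<notin> B"
    then have "z \<in> inside B" using z(1) unfolding region_def by blast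
    then have "z \<in> interior W" using inside_int by blast
    then obtain z' where "z' \<in> W" "s * c1 z' < s * c1 z" using int_lower[OF _ c s] by blast
    then show False using mn[of z'] z(2) by simp
  qed
  then obtain j where j: "j < n" "z \<in> edge_seg vs j" unfolding B_edges by blast
  define u where "u = vs ! j"
  define w where "w = nxt vs j"
  obtain t where t: "0 \<le> t" "t \<le> 1" "z = (1 - t) *\<^sub>R u + t *\<^sub>R w"
    using j(2) unfolding edge_seg_def u_def w_def closed_segment_def by blast
  have cz: "c1 z = (1 - t) * c1 u + t * c1 w" using coord_lin[OF c] t(3) by simp
  show ?thesis
  proof (cases "c1 u = c1 w")
    case True
    then have "c1 u = c1 z0" using cz z(2) by (simp add: algebra_simps)
    then show ?thesis using j True unfolding u_def w_def by auto
  next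
    case False
    have c2e: "c2 u = c2 w" using edge_type[OF c j(1)] False unfolding u_def w_def by blast
    have uW: "u \<in> W" "w \<in> W" unfolding u_def w_def using vW nW j(1) by auto
    have zuw: "z = u \<or> z = w"
    proof (rule ccontr)
      assume nz: "\<not> (z = u \<or> z = w)"
      then have t01: "0 < t" "t < 1" using t by (auto simp: le_less)
      define A where "A = s * c1 u - s * c1 z0"
      define Bv where "Bv = s * c1 w - s * c1 z0"
      have A0: "A \<ge> 0" "Bv \<ge> 0" using mn[OF uW(1)] mn[OF uW(2)] unfolding A_def Bv_def by auto
      have "s * c1 z - s * c1 z0 = (1 - t) * A + t * Bv" unfolding A_def Bv_def cz by (simp add: algebra_simps)
      then have sum0: "(1 - t) * A + t * Bv = 0" using z(2) by simp
      have "(1 - t) * A \<ge> 0" "t * Bv \<ge> 0" using A0 t by auto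
      then have "(1 - t) * A = 0" "t * Bv = 0" using sum0 by linarith+
      then have "A = 0" "Bv = 0" using t01 by auto
      then have "s * c1 u = s * c1 w" unfolding A_def Bv_def by linarith
      then have "c1 u = c1 w" using s by auto
      then show False using False by simp
    qed
    show ?thesis
    proof (cases "z = u")
      case True
      define p where "p = (j + n - 1) mod n"
      have p: "p < n" "Suc p mod n = j" using idx_prev[OF n0 j(1)] unfolding p_def by auto
      have np: "nxt vs p = u" unfolding nxt_idx p(2) u_def ..
      have "c1 (vs ! p) = c1 (nxt vs p)"
      proof (rule ccontr)
        assume "c1 (vs ! p) \<noteq> c1 (nxt vs p)"
        then have e2: "c2 (vs ! p) = c2 (nxt vs p)" using edge_type[OF c p(1)] by blast
        have "c2 (nxt vs p) = c2 (nxt vs (Suc p mod n))" unfolding p(2) np using c2e unfolding w_def .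
        then show False using consec[OF coord_swap[OF c] p(1) e2] by blast
      qed
      moreover have "z \<in> edge_seg vs p" unfolding edge_seg_def using True np by simp
      ultimately show ?thesis using p(1) np True z(2) by auto
    next
      case False
      then have zw: "z = w" using zuw by blast
      define k where "k = Suc j mod n"
      have k: "k < n" using sidx[OF j(1)] unfolding k_def .
      have vk: "vs ! k = w" unfolding k_def w_def nxt_idx ..
      have "c1 (vs ! k) = c1 (nxt vs k)"
      proof (rule ccontr)
        assume "c1 (vs ! k) \<noteq> c1 (nxt vs k)"
        then have e2: "c2 (vs ! k) = c2 (nxt vs k)" using edge_type[OF c k] by blast
        have e1: "c2 (vs ! j) = c2 (nxt vs j)" using c2e unfolding u_def w_def .
        have "c2 (nxt vs j) = c2 (nxt vs (Suc j mod n))" using e2 vk unfolding k_def w_def by simp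
        then show False using consec[OF coord_swap[OF c] j(1) e1] by blast
      qed
      moreover have "z \<in> edge_seg vs k" unfolding edge_seg_def using zw vk by simp
      ultimately show ?thesis using k vk zw z(2) by auto
    qed
  qed
qed

lemma side:
  assumes c: "coord c1 c2" and s: "s = 1 \<or> s = -1" and z0: "z0 \<in> W" and mn: "\<And>z. z \<in> W \<Longrightarrow> s * c1 z0 \<le> s * c1 z"
  shows "\<exists>i<n. c1 (vs ! i) = c1 z0 \<and> c1 (nxt vs i) = c1 z0 \<and> (\<forall>z\<in>W. c1 z = c1 z0 \<longrightarrow> z \<in> edge_seg vs i)"
proof -
  obtain i where i: "i < n" "c1 (vs ! i) = c1 z0" "c1 (nxt vs i) = c1 z0"
    using side_edge[OF c s z0 mn z0] by blast
  have "\<forall>z\<in>W. c1 z = c1 z0 \<longrightarrow> z \<in> edge_seg vs i"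
  proof (intro ballI impI)
    fix z assume z: "z \<in> W" "c1 z = c1 z0"
    obtain j where j: "j < n" "c1 (vs ! j) = c1 z0" "c1 (nxt vs j) = c1 z0" "z \<in> edge_seg vs j"
      using side_edge[OF c s z0 mn z] by blast
    have "j = i" using uniq[OF c j(1) i(1) j(2,3) i(2,3)] .
    then show "z \<in> edge_seg vs i" using j(4) by simp
  qed
  then show ?thesis using i by blast
qed

end

context poly begin

abbreviation "X0 \<equiv> xmin W"
abbreviation "X1 \<equiv> xmax W"
abbreviation "Y0 \<equiv> ymin W"
abbreviation "Y1 \<equiv> ymax W"

lemma cf: "continuous_on W (\<lambda>x. fst x)" "continuous_on W (\<lambda>x. snd x)" by (intro continuous_intros)+

lemma ex_x0: "\<exists>z\<in>W. fst z = X0 \<and> (\<forall>w\<in>W. fst z \<le> fst w)"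
proof -
  obtain z where z: "z \<in> W" "\<forall>w\<in>W. fst z \<le> fst w" using continuous_attains_inf[OF compact_W W_ne cf(1)] by blast
  have "xmin W = fst z" unfolding xmin_def by (rule cInf_eq_minimum) (use z in auto)
  then show ?thesis using z by auto
qed
lemma ex_x1: "\<exists>z\<in>W. fst z = X1 \<and> (\<forall>w\<in>W. fst w \<le> fst z)"
proof -
  obtain z where z: "z \<in> W" "\<forall>w\<in>W. fst w \<le> fst z" using continuous_attains_sup[OF compact_W W_ne cf(1)] by blast
  have "xmax W = fst z" unfolding xmax_def by (rule cSup_eq_maximum) (use z in auto)
  then show ?thesis using z by auto
qed
lemma ex_y0: "\<exists>z\<in>W. snd z = Y0 \<and> (\<forall>w\<in>W. snd z \<le> snd w)"
proof -
  obtain z where z: "z \<in> W" "\<forall>w\<in>W. snd z \<le> snd w" using continuous_attains_inf[OF compact_W W_ne cf(2)] by blast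
  have "ymin W = snd z" unfolding ymin_def by (rule cInf_eq_minimum) (use z in auto)
  then show ?thesis using z by auto
qed
lemma ex_y1: "\<exists>z\<in>W. snd z = Y1 \<and> (\<forall>w\<in>W. snd w \<le> snd z)"
proof -
  obtain z where z: "z \<in> W" "\<forall>w\<in>W. snd w \<le> snd z" using continuous_attains_sup[OF compact_W W_ne cf(2)] by blast
  have "ymax W = snd z" unfolding ymax_def by (rule cSup_eq_maximum) (use z in auto)
  then show ?thesis using z by auto
qed

lemma boxW: "z \<in> W \<Longrightarrow> X0 \<le> fst z \<and> fst z \<le> X1 \<and> Y0 \<le> snd z \<and> snd z \<le> Y1"
  using ex_x0 ex_x1 ex_y0 ex_y1 by metis

lemma bbox_eq: "bbox W = {X0..X1} \<times> {Y0..Y1}"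
  unfolding bbox_def by auto

lemma fr_mem: "z \<in> frontier (bbox W) \<longleftrightarrow> (X0 \<le> fst z \<and> fst z \<le> X1 \<and> Y0 \<le> snd z \<and> snd z \<le> Y1) \<and>
   (fst z = X0 \<or> fst z = X1 \<or> snd z = Y0 \<or> snd z = Y1)"
proof -
  have "frontier (bbox W) = {X0..X1} \<times> {Y0..Y1} - {X0<..<X1} \<times> {Y0<..<Y1}"
    unfolding frontier_def bbox_eq closure_Times interior_Times by simp
  then show ?thesis by (cases z) auto
qed

lemma v012: "vs ! 0 \<noteq> vs ! 1" "vs ! 0 \<noteq> vs ! 2" "vs ! 1 \<noteq> vs ! 2"
  "vs ! 0 \<in> set vs" "vs ! 1 \<in> set vs" "vs ! 2 \<in> set vs"
proof -
  have l: "0 < n" "1 < n" "2 < n" using n3 by auto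
  show "vs ! 0 \<noteq> vs ! 1" "vs ! 0 \<noteq> vs ! 2" "vs ! 1 \<noteq> vs ! 2"
    using vinj[OF l(1) l(2)] vinj[OF l(1) l(3)] vinj[OF l(2) l(3)] by simp_all
  show "vs ! 0 \<in> set vs" "vs ! 1 \<in> set vs" "vs ! 2 \<in> set vs" using l by simp_all
qed

lemma vset_W: "v \<in> set vs \<Longrightarrow> v \<in> W"
  using vW by (metis in_set_conv_nth)

lemma X01: "X0 < X1"
proof (rule ccontr)
  assume "\<not> X0 < X1"
  then have eq: "\<And>z. z \<in> W \<Longrightarrow> fst z = X0" using boxW by fastforce
  have "collinear {vs ! 0, vs ! 1, vs ! 2}"
    by (rule col3[of fst snd]) (use eq vset_W v012 in \<open>auto simp: coord_def\<close>)
  then show False using nc v012 by blast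
qed

lemma Y01: "Y0 < Y1"
proof (rule ccontr)
  assume "\<not> Y0 < Y1"
  then have eq: "\<And>z. z \<in> W \<Longrightarrow> snd z = Y0" using boxW by fastforce
  have "collinear {vs ! 0, vs ! 1, vs ! 2}"
    by (rule col3[of snd fst]) (use eq vset_W v012 in \<open>auto simp: coord_def\<close>)
  then show False using nc v012 by blast
qed

lemma c_sf: "coord snd fst" "coord fst snd" unfolding coord_def by auto

lemma hside_of: assumes s: "s = 1 \<or> s = -1" and z0: "z0 \<in> W" and mn: "\<And>z. z \<in> W \<Longrightarrow> s * snd z0 \<le> s * snd z"
  shows "hside W (snd z0)"
proof -
  obtain i where i: "i < n" "snd (vs ! i) = snd z0" "snd (nxt vs i) = snd z0" "\<forall>z\<in>W. snd z = snd z0 \<longrightarrow> z \<in> edge_seg vs i"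
    using side[OF c_sf(1) s z0 mn] by blast
  define u where "u = vs ! i"
  define w where "w = nxt vs i"
  have fne: "fst u \<noteq> fst w" using edge_excl[OF c_sf(1) i(1)] i(2,3) unfolding u_def w_def by simp
  have ue: "u = (fst u, snd z0)" "w = (fst w, snd z0)" using i(2,3) unfolding u_def w_def by (simp_all add: prod_eq_iff)
  have A: "\<forall>x. min (fst u) (fst w) \<le> x \<longrightarrow> x \<le> max (fst u) (fst w) \<longrightarrow> (x, snd z0) \<in> W"
  proof (intro allI impI)
    fix x assume "min (fst u) (fst w) \<le> x" "x \<le> max (fst u) (fst w)"
    then have "(x, snd z0) \<in> closed_segment u w" by (subst ue(1), subst ue(2)) (simp add: hseg_mem)
    then show "(x, snd z0) \<in> W" using edge_W[OF i(1)] unfolding edge_seg_def u_def w_def by blast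
  qed
  have Bq: "\<forall>z\<in>W. snd z = snd z0 \<longrightarrow> min (fst u) (fst w) \<le> fst z \<and> fst z \<le> max (fst u) (fst w)"
  proof (intro ballI impI)
    fix z assume "z \<in> W" "snd z = snd z0"
    then have "z \<in> closed_segment u w" using i(4) unfolding edge_seg_def u_def w_def by blast
    then show "min (fst u) (fst w) \<le> fst z \<and> fst z \<le> max (fst u) (fst w)" using seg_coord by blast
  qed
  have "min (fst u) (fst w) < max (fst u) (fst w)" using fne by (simp add: min_def max_def)
  then show ?thesis unfolding hside_def using A Bq by blast
qed

lemma vside_of: assumes s: "s = 1 \<or> s = -1" and z0: "z0 \<in> W" and mn: "\<And>z. z \<in> W \<Longrightarrow> s * fst z0 \<le> s * fst z"
  shows "vside W (fst z0)"
proof -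
  obtain i where i: "i < n" "fst (vs ! i) = fst z0" "fst (nxt vs i) = fst z0" "\<forall>z\<in>W. fst z = fst z0 \<longrightarrow> z \<in> edge_seg vs i"
    using side[OF c_sf(2) s z0 mn] by blast
  define u where "u = vs ! i"
  define w where "w = nxt vs i"
  have fne: "snd u \<noteq> snd w" using edge_excl[OF c_sf(2) i(1)] i(2,3) unfolding u_def w_def by simp
  have ue: "u = (fst z0, snd u)" "w = (fst z0, snd w)" using i(2,3) unfolding u_def w_def by (simp_all add: prod_eq_iff)
  have A: "\<forall>y. min (snd u) (snd w) \<le> y \<longrightarrow> y \<le> max (snd u) (snd w) \<longrightarrow> (fst z0, y) \<in> W"
  proof (intro allI impI)
    fix y assume "min (snd u) (snd w) \<le> y" "y \<le> max (snd u) (snd w)"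
    then have "(fst z0, y) \<in> closed_segment u w" by (subst ue(1), subst ue(2)) (simp add: vseg_mem)
    then show "(fst z0, y) \<in> W" using edge_W[OF i(1)] unfolding edge_seg_def u_def w_def by blast
  qed
  have Bq: "\<forall>z\<in>W. fst z = fst z0 \<longrightarrow> min (snd u) (snd w) \<le> snd z \<and> snd z \<le> max (snd u) (snd w)"
  proof (intro ballI impI)
    fix z assume "z \<in> W" "fst z = fst z0"
    then have "z \<in> closed_segment u w" using i(4) unfolding edge_seg_def u_def w_def by blast
    then show "min (snd u) (snd w) \<le> snd z \<and> snd z \<le> max (snd u) (snd w)" using seg_coord by blast
  qed
  have "min (snd u) (snd w) < max (snd u) (snd w)" using fne by (simp add: min_def max_def)
  then show ?thesis unfolding vside_def using A Bq by blast
qed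

lemma sides: "hside W Y0" "hside W Y1" "vside W X0" "vside W X1"
proof -
  obtain z where z: "z \<in> W" "snd z = Y0" "\<forall>w\<in>W. snd z \<le> snd w" using ex_y0 by blast
  show "hside W Y0" using hside_of[of 1 z] z by auto
next
  obtain z where z: "z \<in> W" "snd z = Y1" "\<forall>w\<in>W. snd w \<le> snd z" using ex_y1 by blast
  show "hside W Y1" using hside_of[of "-1" z] z by auto
next
  obtain z where z: "z \<in> W" "fst z = X0" "\<forall>w\<in>W. fst z \<le> fst w" using ex_x0 by blast
  show "vside W X0" using vside_of[of 1 z] z by auto
next
  obtain z where z: "z \<in> W" "fst z = X1" "\<forall>w\<in>W. fst w \<le> fst z" using ex_x1 by blast
  show "vside W X1" using vside_of[of "-1" z] z by auto
qed

end

context poly begin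

lemma edge_fr: assumes i: "i < n" and h: "\<forall>z\<in>edge_seg vs i. fst z = X0 \<or> fst z = X1 \<or> snd z = Y0 \<or> snd z = Y1"
  shows "(vs ! i, nxt vs i) \<in> extreme_edges vs"
proof -
  have e: "(vs ! i, nxt vs i) \<in> edges vs" unfolding edges_def using i by blast
  have "closed_segment (vs ! i) (nxt vs i) \<subseteq> frontier (bbox W)"
  proof
    fix z assume z: "z \<in> closed_segment (vs ! i) (nxt vs i)"
    then have "z \<in> W" using edge_W[OF i] unfolding edge_seg_def by blast
    then show "z \<in> frontier (bbox W)" unfolding fr_mem using boxW h z unfolding edge_seg_def by blast
  qed
  then show ?thesis unfolding extreme_edges_def using e by blast
qed

lemma ext_D: assumes "e \<in> extreme_edges vs"
  shows "\<exists>i<n. e = (vs ! i, nxt vs i) \<and> closed_segment (vs ! i) (nxt vs i) \<subseteq> frontier (bbox W)"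
  using assms unfolding extreme_edges_def edges_def by blast

lemma mid_seg: "(1/2::real) *\<^sub>R (u::pt) + (1/2::real) *\<^sub>R w \<in> closed_segment u w"
proof -
  have "(1/2::real) *\<^sub>R u + (1/2::real) *\<^sub>R w = (1 - 1/2) *\<^sub>R u + (1/2::real) *\<^sub>R w" by simp
  moreover have "(0::real) \<le> 1/2" "(1/2::real) \<le> 1" by simp_all
  ultimately show ?thesis unfolding closed_segment_def by blast
qed

lemma hlevel: assumes i: "i < n" and hs: "snd (vs ! i) = snd (nxt vs i)"
  and fr: "closed_segment (vs ! i) (nxt vs i) \<subseteq> frontier (bbox W)"
  shows "snd (vs ! i) = Y0 \<or> snd (vs ! i) = Y1"
proof (rule ccontr)
  assume nl: "\<not> (snd (vs ! i) = Y0 \<or> snd (vs ! i) = Y1)"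
  define u where "u = vs ! i"
  define w where "w = nxt vs i"
  define m where "m = (1/2::real) *\<^sub>R u + (1/2::real) *\<^sub>R w"
  have fne: "fst u \<noteq> fst w" using edge_excl[OF c_sf(1) i] hs unfolding u_def w_def by simp
  have mem: "u \<in> frontier (bbox W)" "w \<in> frontier (bbox W)" "m \<in> frontier (bbox W)"
    using fr mid_seg[of u w] unfolding u_def w_def m_def by auto
  have sm: "snd m = snd u" "fst m = (fst u + fst w) / 2" unfolding m_def using hs unfolding u_def w_def by auto
  have "fst u = X0 \<or> fst u = X1" "fst w = X0 \<or> fst w = X1" "fst m = X0 \<or> fst m = X1"
    using mem nl hs sm unfolding fr_mem u_def w_def by auto
  then show False using fne sm X01 by auto
qed

lemma vlevel: assumes i: "i < n" and hs: "fst (vs ! i) = fst (nxt vs i)"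
  and fr: "closed_segment (vs ! i) (nxt vs i) \<subseteq> frontier (bbox W)"
  shows "fst (vs ! i) = X0 \<or> fst (vs ! i) = X1"
proof (rule ccontr)
  assume nl: "\<not> (fst (vs ! i) = X0 \<or> fst (vs ! i) = X1)"
  define u where "u = vs ! i"
  define w where "w = nxt vs i"
  define m where "m = (1/2::real) *\<^sub>R u + (1/2::real) *\<^sub>R w"
  have fne: "snd u \<noteq> snd w" using edge_excl[OF c_sf(2) i] hs unfolding u_def w_def by simp
  have mem: "u \<in> frontier (bbox W)" "w \<in> frontier (bbox W)" "m \<in> frontier (bbox W)"
    using fr mid_seg[of u w] unfolding u_def w_def m_def by auto
  have sm: "fst m = fst u" "snd m = (snd u + snd w) / 2" unfolding m_def using hs unfolding u_def w_def by auto
  have "snd u = Y0 \<or> snd u = Y1" "snd w = Y0 \<or> snd w = Y1" "snd m = Y0 \<or> snd m = Y1"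
    using mem nl hs sm unfolding fr_mem u_def w_def by auto
  then show False using fne sm Y01 by auto
qed

lemma const_seg: "(z::pt) \<in> closed_segment u w \<Longrightarrow> snd u = h \<Longrightarrow> snd w = h \<Longrightarrow> snd z = h"
  using seg_coord(3,4)[of z u w] by simp
lemma const_seg_f: "(z::pt) \<in> closed_segment u w \<Longrightarrow> fst u = h \<Longrightarrow> fst w = h \<Longrightarrow> fst z = h"
  using seg_coord(1,2)[of z u w] by simp

lemma cross_h: assumes "is_cross vs sH sV"
  shows "\<exists>a b. sH = closed_segment a b \<and> snd a = Y0 \<and> snd b = Y1"
proof -
  obtain a b e1 e2 where ab: "sH = closed_segment a b" "e1 \<in> horizontal_extreme_edges vs"
    "e2 \<in> horizontal_extreme_edges vs" "e1 \<noteq> e2" "a \<in> closed_segment (fst e1) (snd e1)" "b \<in> closed_segment (fst e2) (snd e2)"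
    using assms unfolding is_cross_def by blast
  have lev: "\<exists>i<n. e = (vs ! i, nxt vs i) \<and> snd (vs ! i) = snd (nxt vs i) \<and> (snd (vs ! i) = Y0 \<or> snd (vs ! i) = Y1)"
    if "e \<in> horizontal_extreme_edges vs" for e
  proof -
    have e: "e \<in> extreme_edges vs" "snd (fst e) = snd (snd e)" using that unfolding horizontal_extreme_edges_def by auto
    obtain i where i: "i < n" "e = (vs ! i, nxt vs i)" "closed_segment (vs ! i) (nxt vs i) \<subseteq> frontier (bbox W)"
      using ext_D[OF e(1)] by blast
    have "snd (vs ! i) = snd (nxt vs i)" using e(2) i(2) by simp
    then show ?thesis using hlevel[OF i(1) _ i(3)] i by blast
  qed
  obtain i where i: "i < n" "e1 = (vs ! i, nxt vs i)" "snd (vs ! i) = snd (nxt vs i)" "snd (vs ! i) = Y0 \<or> snd (vs ! i) = Y1"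
    using lev[OF ab(2)] by blast
  obtain j where j: "j < n" "e2 = (vs ! j, nxt vs j)" "snd (vs ! j) = snd (nxt vs j)" "snd (vs ! j) = Y0 \<or> snd (vs ! j) = Y1"
    using lev[OF ab(3)] by blast
  have sa: "snd a = snd (vs ! i)" using const_seg[of a "vs ! i" "nxt vs i"] ab(5) i by simp
  have sb: "snd b = snd (vs ! j)" using const_seg[of b "vs ! j" "nxt vs j"] ab(6) j by simp
  have "snd (vs ! i) \<noteq> snd (vs ! j)"
  proof
    assume eq: "snd (vs ! i) = snd (vs ! j)"
    have "i = j" by (rule uniq[OF c_sf(1) i(1) j(1), of "snd (vs ! i)"]) (use eq i j in auto)
    then show False using ab(4) i(2) j(2) by simp
  qed
  then have "(snd a = Y0 \<and> snd b = Y1) \<or> (snd b = Y0 \<and> snd a = Y1)" using sa sb i(4) j(4) by auto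
  then show ?thesis using ab(1) closed_segment_commute by metis
qed

lemma cross_v: assumes "is_cross vs sH sV"
  shows "\<exists>c d. sV = closed_segment c d \<and> fst c = X0 \<and> fst d = X1"
proof -
  obtain a b e1 e2 where ab: "sV = closed_segment a b" "e1 \<in> vertical_extreme_edges vs"
    "e2 \<in> vertical_extreme_edges vs" "e1 \<noteq> e2" "a \<in> closed_segment (fst e1) (snd e1)" "b \<in> closed_segment (fst e2) (snd e2)"
    using assms unfolding is_cross_def by blast
  have lev: "\<exists>i<n. e = (vs ! i, nxt vs i) \<and> fst (vs ! i) = fst (nxt vs i) \<and> (fst (vs ! i) = X0 \<or> fst (vs ! i) = X1)"
    if "e \<in> vertical_extreme_edges vs" for e
  proof -
    have e: "e \<in> extreme_edges vs" "fst (fst e) = fst (snd e)" using that unfolding vertical_extreme_edges_def by auto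
    obtain i where i: "i < n" "e = (vs ! i, nxt vs i)" "closed_segment (vs ! i) (nxt vs i) \<subseteq> frontier (bbox W)"
      using ext_D[OF e(1)] by blast
    have "fst (vs ! i) = fst (nxt vs i)" using e(2) i(2) by simp
    then show ?thesis using vlevel[OF i(1) _ i(3)] i by blast
  qed
  obtain i where i: "i < n" "e1 = (vs ! i, nxt vs i)" "fst (vs ! i) = fst (nxt vs i)" "fst (vs ! i) = X0 \<or> fst (vs ! i) = X1"
    using lev[OF ab(2)] by blast
  obtain j where j: "j < n" "e2 = (vs ! j, nxt vs j)" "fst (vs ! j) = fst (nxt vs j)" "fst (vs ! j) = X0 \<or> fst (vs ! j) = X1"
    using lev[OF ab(3)] by blast
  have sa: "fst a = fst (vs ! i)" using const_seg_f[of a "vs ! i" "nxt vs i"] ab(5) i by simp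
  have sb: "fst b = fst (vs ! j)" using const_seg_f[of b "vs ! j" "nxt vs j"] ab(6) j by simp
  have "fst (vs ! i) \<noteq> fst (vs ! j)"
  proof
    assume eq: "fst (vs ! i) = fst (vs ! j)"
    have "i = j" by (rule uniq[OF c_sf(2) i(1) j(1), of "fst (vs ! i)"]) (use eq i j in auto)
    then show False using ab(4) i(2) j(2) by simp
  qed
  then have "(fst a = X0 \<and> fst b = X1) \<or> (fst b = X0 \<and> fst a = X1)" using sa sb i(4) j(4) by auto
  then show ?thesis using ab(1) closed_segment_commute by metis
qed

end

context poly begin

lemma hedge: assumes "h = Y0 \<or> h = Y1"
  shows "\<exists>i<n. snd (vs ! i) = h \<and> snd (nxt vs i) = h \<and> (\<forall>z\<in>W. snd z = h \<longrightarrow> z \<in> edge_seg vs i)"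
proof (cases "h = Y0")
  case True
  obtain z where z: "z \<in> W" "snd z = Y0" "\<forall>w\<in>W. snd z \<le> snd w" using ex_y0 by blast
  show ?thesis using side[OF c_sf(1), of 1 z] z True by auto
next
  case False
  then have h: "h = Y1" using assms by blast
  obtain z where z: "z \<in> W" "snd z = Y1" "\<forall>w\<in>W. snd w \<le> snd z" using ex_y1 by blast
  show ?thesis using side[OF c_sf(1), of "-1" z] z h by auto
qed

lemma vedge: assumes "h = X0 \<or> h = X1"
  shows "\<exists>i<n. fst (vs ! i) = h \<and> fst (nxt vs i) = h \<and> (\<forall>z\<in>W. fst z = h \<longrightarrow> z \<in> edge_seg vs i)"
proof (cases "h = X0")
  case True
  obtain z where z: "z \<in> W" "fst z = X0" "\<forall>w\<in>W. fst z \<le> fst w" using ex_x0 by blast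
  show ?thesis using side[OF c_sf(2), of 1 z] z True by auto
next
  case False
  then have h: "h = X1" using assms by blast
  obtain z where z: "z \<in> W" "fst z = X1" "\<forall>w\<in>W. fst w \<le> fst z" using ex_x1 by blast
  show ?thesis using side[OF c_sf(2), of "-1" z] z h by auto
qed

lemma corner_I: assumes k: "k \<in> W" "fst k = X0 \<or> fst k = X1" "snd k = Y0 \<or> snd k = Y1"
  shows "k \<in> extreme_corners vs"
proof -
  obtain i where i: "i < n" "snd (vs ! i) = snd k" "snd (nxt vs i) = snd k" "\<forall>z\<in>W. snd z = snd k \<longrightarrow> z \<in> edge_seg vs i"
    using hedge[OF k(3)] by blast
  obtain j where j: "j < n" "fst (vs ! j) = fst k" "fst (nxt vs j) = fst k" "\<forall>z\<in>W. fst z = fst k \<longrightarrow> z \<in> edge_seg vs j"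
    using vedge[OF k(2)] by blast
  have ki: "k \<in> edge_seg vs i" "k \<in> edge_seg vs j" using i(4) j(4) k(1) by auto
  have ij: "i \<noteq> j"
  proof
    assume "i = j"
    then have "vs ! i = nxt vs i" using i(2,3) j(2,3) by (simp add: prod_eq_iff)
    then show False using edge_ne[OF i(1)] by simp
  qed
  have ei: "(vs ! i, nxt vs i) \<in> extreme_edges vs"
  proof (rule edge_fr[OF i(1)])
    show "\<forall>z\<in>edge_seg vs i. fst z = X0 \<or> fst z = X1 \<or> snd z = Y0 \<or> snd z = Y1"
      using const_seg[of _ "vs ! i" "nxt vs i" "snd k"] i(2,3) k(3) unfolding edge_seg_def by auto
  qed
  have ej: "(vs ! j, nxt vs j) \<in> extreme_edges vs"
  proof (rule edge_fr[OF j(1)])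
    show "\<forall>z\<in>edge_seg vs j. fst z = X0 \<or> fst z = X1 \<or> snd z = Y0 \<or> snd z = Y1"
      using const_seg_f[of _ "vs ! j" "nxt vs j" "fst k"] j(2,3) k(2) unfolding edge_seg_def by auto
  qed
  have neq: "(vs ! i, nxt vs i) \<noteq> (vs ! j, nxt vs j)" using vinj[OF i(1) j(1)] ij by simp
  have II: "edge_seg vs i \<inter> edge_seg vs j = (if Suc i mod n = j then {vs ! j} else if Suc j mod n = i then {vs ! i} else {})"
    using inter[OF i(1) j(1) ij] .
  have "(k = vs ! j \<and> k = nxt vs i) \<or> (k = vs ! i \<and> k = nxt vs j)"
  proof (cases "Suc i mod n = j")
    case True
    then have "k = vs ! j" using II ki by auto
    then show ?thesis using True unfolding nxt_idx by simp
  next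
    case False
    show ?thesis
    proof (cases "Suc j mod n = i")
      case True
      then have "k = vs ! i" using II ki False by auto
      then show ?thesis using True unfolding nxt_idx by simp
    next
      case F2: False
      then show ?thesis using II ki False by auto
    qed
  qed
  moreover have "vs ! i \<in> set vs" "vs ! j \<in> set vs" using i(1) j(1) by simp_all
  ultimately show ?thesis unfolding extreme_corners_def using ei ej neq by fastforce
qed

lemma corner_D: assumes v: "v \<in> extreme_corners vs"
  shows "v \<in> W \<and> (fst v = X0 \<or> fst v = X1) \<and> (snd v = Y0 \<or> snd v = Y1)"
proof -
  obtain e1 e2 where e: "v \<in> set vs" "e1 \<in> extreme_edges vs" "e2 \<in> extreme_edges vs" "e1 \<noteq> e2"
    "v \<in> {fst e1, snd e1}" "v \<in> {fst e2, snd e2}"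
    using v unfolding extreme_corners_def by blast
  obtain i where i: "i < n" "e1 = (vs ! i, nxt vs i)" "closed_segment (vs ! i) (nxt vs i) \<subseteq> frontier (bbox W)"
    using ext_D[OF e(2)] by blast
  obtain j where j: "j < n" "e2 = (vs ! j, nxt vs j)" "closed_segment (vs ! j) (nxt vs j) \<subseteq> frontier (bbox W)"
    using ext_D[OF e(3)] by blast
  have vi: "v = vs ! i \<or> v = nxt vs i" using e(5) i(2) by simp
  have vj: "v = vs ! j \<or> v = nxt vs j" using e(6) j(2) by simp
  have Hi: "snd v = Y0 \<or> snd v = Y1" if "snd (vs ! i) = snd (nxt vs i)"
    using hlevel[OF i(1) that i(3)] vi that by auto
  have Vi: "fst v = X0 \<or> fst v = X1" if "fst (vs ! i) = fst (nxt vs i)"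
    using vlevel[OF i(1) that i(3)] vi that by auto
  have Hj: "snd v = Y0 \<or> snd v = Y1" if "snd (vs ! j) = snd (nxt vs j)"
    using hlevel[OF j(1) that j(3)] vj that by auto
  have Vj: "fst v = X0 \<or> fst v = X1" if "fst (vs ! j) = fst (nxt vs j)"
    using vlevel[OF j(1) that j(3)] vj that by auto
  have HH: False if "snd (vs ! i) = snd (nxt vs i)" "snd (vs ! j) = snd (nxt vs j)"
  proof -
    have "snd (vs ! i) = snd v" "snd (vs ! j) = snd v" using that vi vj by auto
    then have "i = j" using uniq[OF c_sf(1) i(1) j(1), of "snd v"] that by simp
    then show False using e(4) i(2) j(2) by simp
  qed
  have VV: False if "fst (vs ! i) = fst (nxt vs i)" "fst (vs ! j) = fst (nxt vs j)"
  proof -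
    have "fst (vs ! i) = fst v" "fst (vs ! j) = fst v" using that vi vj by auto
    then have "i = j" using uniq[OF c_sf(2) i(1) j(1), of "fst v"] that by simp
    then show False using e(4) i(2) j(2) by simp
  qed
  have "(fst v = X0 \<or> fst v = X1) \<and> (snd v = Y0 \<or> snd v = Y1)"
    using edge_rect[OF i(1)] edge_rect[OF j(1)] Hi Vi Hj Vj HH VV by blast
  then show ?thesis using vset_W[OF e(1)] by blast
qed

end

theorem lemma8:
  fixes vs :: "(real \<times> real) list" and sH sV :: "(real \<times> real) set"
  assumes "T_obstacle vs"
    and "is_cross vs sH sV"
  shows "minimum_skeleton (region vs) {sH, sV}"
proof -
  have T: "simple_polygon vs" "rectilinear vs" "rect_convex (region vs)" "card (extreme_corners vs) = 2"
    "\<forall>u\<in>extreme_corners vs. \<forall>v\<in>extreme_corners vs. on_common_side (region vs) u v"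
    using assms(1) unfolding T_obstacle_def by auto
  interpret poly vs using T(1,2) by unfold_locales
  obtain a b where ab: "sH = closed_segment a b" "snd a = Y0" "snd b = Y1" using cross_h[OF assms(2)] by blast
  obtain c d where cd: "sV = closed_segment c d" "fst c = X0" "fst d = X1" using cross_v[OF assms(2)] by blast
  have sub: "sH \<subseteq> W" "sV \<subseteq> W" using assms(2) unfolding is_cross_def by auto
  have r: "raw W X0 X1 Y0 Y1 a b c d"
    by (rule rawI) (use X01 Y01 boxW rc_HC[OF T(3)] rc_VC[OF T(3)] sides ab cd sub in auto)
  define E where "E = extreme_corners vs"
  have inE: "k \<in> E \<longleftrightarrow> k \<in> W \<and> (fst k = X0 \<or> fst k = X1) \<and> (snd k = Y0 \<or> snd k = Y1)" for k
    unfolding E_def using corner_I corner_D by blast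
  have ocs: "on_common_side W u v" if "u \<in> E" "v \<in> E" for u v using T(5) that unfolding E_def by blast
  have noD1: False if "(X0,Y0) \<in> W" "(X1,Y1) \<in> W"
  proof -
    have "on_common_side W (X0,Y0) (X1,Y1)" using ocs inE that by simp
    then show False using X01 Y01 unfolding on_common_side_def by auto
  qed
  have noD2: False if "(X1,Y0) \<in> W" "(X0,Y1) \<in> W"
  proof -
    have "on_common_side W (X1,Y0) (X0,Y1)" using ocs inE that by simp
    then show False using X01 Y01 unfolding on_common_side_def by auto
  qed
  have cE: "card E = 2" using T(4) unfolding E_def .
  have sing: False if "E \<subseteq> {k}" for k
  proof -
    have "card E \<le> card {k}" using that by (intro card_mono) auto
    then show False using cE by simp
  qed
  have E_sub: "k \<in> E \<Longrightarrow> k = (X0,Y0) \<or> k = (X1,Y0) \<or> k = (X0,Y1) \<or> k = (X1,Y1)" for k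
    using inE[of k] by (cases k) auto
  have cases: "((X0,Y0) \<in> W \<and> (X1,Y0) \<in> W) \<or> ((X0,Y1) \<in> W \<and> (X1,Y1) \<in> W) \<or>
      ((X0,Y0) \<in> W \<and> (X0,Y1) \<in> W) \<or> ((X1,Y0) \<in> W \<and> (X1,Y1) \<in> W)"
  proof (rule ccontr)
    assume na: "\<not> ?thesis"
    consider "(X0,Y0) \<in> W" | "(X1,Y0) \<in> W" | "(X0,Y1) \<in> W" | "(X1,Y1) \<in> W"
      | "(X0,Y0) \<notin> W" "(X1,Y0) \<notin> W" "(X0,Y1) \<notin> W" "(X1,Y1) \<notin> W" by blast
    then show False
    proof cases
      case 1 then have "E \<subseteq> {(X0,Y0)}" using na noD1 E_sub inE by fastforce
      then show False by (rule sing)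
    next
      case 2 then have "E \<subseteq> {(X1,Y0)}" using na noD2 E_sub inE by fastforce
      then show False by (rule sing)
    next
      case 3 then have "E \<subseteq> {(X0,Y1)}" using na noD2 E_sub inE by fastforce
      then show False by (rule sing)
    next
      case 4 then have "E \<subseteq> {(X1,Y1)}" using na noD1 E_sub inE by fastforce
      then show False by (rule sing)
    next
      case 5 then have "E \<subseteq> {}" using E_sub inE by fastforce
      then show False using cE by simp
    qed
  qed
  have "minimum_skeleton W {closed_segment a b, closed_segment c d}"
  proof -
    from cases consider "(X0,Y0) \<in> W" "(X1,Y0) \<in> W" | "(X0,Y1) \<in> W" "(X1,Y1) \<in> W"
      | "(X0,Y0) \<in> W" "(X0,Y1) \<in> W" | "(X1,Y0) \<in> W" "(X1,Y1) \<in> W" by blast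
    then show ?thesis
    proof cases
      case 1
      then have "(X0,Y1) \<notin> W" "(X1,Y1) \<notin> W" using noD1 noD2 by blast+
      then show ?thesis using raw_bot[OF r] 1 by blast
    next
      case 2
      then have "(X0,Y0) \<notin> W" "(X1,Y0) \<notin> W" using noD1 noD2 by blast+
      then show ?thesis using raw_top[OF r] 2 by blast
    next
      case 3
      then have "(X1,Y0) \<notin> W" "(X1,Y1) \<notin> W" using noD1 noD2 by blast+
      then show ?thesis using raw_left[OF r] 3 by blast
    next
      case 4
      then have "(X0,Y0) \<notin> W" "(X0,Y1) \<notin> W" using noD1 noD2 by blast+
      then show ?thesis using raw_right[OF r] 4 by blast
    qed
  qed
  then show ?thesis using ab(1) cd(1) by simp
qed

end
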